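(* For any frame $L$, the map $f\mapsto \beta\circ f$, where $\beta\colon\mathrm{coS}(L)\to\mathfrak{B}(\mathrm{coS}(L))$, $S\mapsto S^{\ast\ast}$, restricts to an order isomorphism $\mathrm{F}(L)\to\mathrm{C}(\mathfrak{B}(\mathrm{coS}(L)))$.
   Context: $\mathbb{Q}$ is the rationals. A sublocale of $L$ is a subset closed under arbitrary meets and such that $x\to s\in S$ for $x\in L$, $s\in S$; $\mathrm{coS}(L)$ is the frame of sublocales ordered by reverse inclusion, with pseudocomplement $^\ast$. For a frame $M$, $\mathfrak{B}(M)=\{x\mid x=x^{\ast\ast}\}$ is its Booleanization (a complete Boolean algebra) and $x\mapsto x^{\ast\ast}$ is a frame homomorphism $M\to\mathfrak{B}(M)$. The frame $\mathfrak{L}(\overline{\mathbb{IR}})$ is presented by generators $(r,\textsf{---})$, $(\textsf{---},s)$ ($r,s\in\mathbb{Q}$) with relations (r1) $(r,\textsf{---})\wedge(\textsf{---},s)=0$ for $r\ge s$; (r3) $(r,\textsf{---})=\bigvee_{s>r}(s,\textsf{---})$; (r4) $(\textsf{---},s)=\bigvee_{r<s}(\textsf{---},r)$. For a frame $M$, homomorphisms $\mathfrak{L}(\overline{\mathbb{IR}})\to M$ are ordered by $f\le g$ iff $f(r,\textsf{---})\le g(r,\textsf{---})$ and $g(\textsf{---},s)\le f(\textsf{---},s)$; $\mathrm{C}(M)$ (continuous real functions) is the set of those $f$ with (r2) $f(r,\textsf{---})\vee f(\textsf{---},s)=1$ for $r<s$, (r5) $\bigvee_r f(r,\textsf{---})=1$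 and (r6) $\bigvee_s f(\textsf{---},s)=1$. $\overline{\mathrm{F}}(L)$ is the set of homomorphisms $f\colon\mathfrak{L}(\overline{\mathbb{IR}})\to\mathrm{coS}(L)$ with $f(r,\textsf{---})^\ast\le f(\textsf{---},s)$ and $f(\textsf{---},s)^\ast\le f(r,\textsf{---})$ for $r<s$; it is a complete lattice with top $\boldsymbol{+\infty}$ ($(r,\textsf{---})\mapsto1$, $(\textsf{---},s)\mapsto0$) and bottom $\boldsymbol{-\infty}$ ($(r,\textsf{---})\mapsto0$, $(\textsf{---},s)\mapsto1$). $\mathrm{F}(L)$ is the set of $f\in\overline{\mathrm{F}}(L)$ such that for all $g\in\overline{\mathrm{F}}(L)$, $f\vee g=\boldsymbol{+\infty}\Rightarrow g=\boldsymbol{+\infty}$ and $f\wedge g=\boldsymbol{-\infty}\Rightarrow g=\boldsymbol{-\infty}$. *)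

theory Defs
  imports Complex_Main
begin

definition is_lub :: "'b set \<Rightarrow> ('b \<Rightarrow> 'b \<Rightarrow> bool) \<Rightarrow> 'b set \<Rightarrow> 'b \<Rightarrow> bool" where
  "is_lub A le X u \<longleftrightarrow> u \<in> A \<and> (\<forall>x\<in>X. le x u) \<and> (\<forall>v\<in>A. (\<forall>x\<in>X. le x v) \<longrightarrow> le u v)"

definition is_glb :: "'b set \<Rightarrow> ('b \<Rightarrow> 'b \<Rightarrow> bool) \<Rightarrow> 'b set \<Rightarrow> 'b \<Rightarrow> bool" where
  "is_glb A le X u \<longleftrightarrow> u \<in> A \<and> (\<forall>x\<in>X. le u x) \<and> (\<forall>v\<in>A. (\<forall>x\<in>X. le v x) \<longrightarrow> le v u)"

definition lub :: "'b set \<Rightarrow> ('b \<Rightarrow> 'b \<Rightarrow> bool) \<Rightarrow> 'b set \<Rightarrow> 'b" where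
  "lub A le X = (THE u. is_lub A le X u)"

definition glb :: "'b set \<Rightarrow> ('b \<Rightarrow> 'b \<Rightarrow> bool) \<Rightarrow> 'b set \<Rightarrow> 'b" where
  "glb A le X = (THE u. is_glb A le X u)"

definition top_el :: "'b set \<Rightarrow> ('b \<Rightarrow> 'b \<Rightarrow> bool) \<Rightarrow> 'b" where
  "top_el A le = glb A le {}"

definition bot_el :: "'b set \<Rightarrow> ('b \<Rightarrow> 'b \<Rightarrow> bool) \<Rightarrow> 'b" where
  "bot_el A le = lub A le {}"

definition meet :: "'b set \<Rightarrow> ('b \<Rightarrow> 'b \<Rightarrow> bool) \<Rightarrow> 'b \<Rightarrow> 'b \<Rightarrow> 'b" where
  "meet A le x y = glb A le {x, y}"

definition join :: "'b set \<Rightarrow> ('b \<Rightarrow> 'b \<Rightarrow> bool) \<Rightarrow> 'b \<Rightarrow> 'b \<Rightarrow> 'b" where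
  "join A le x y = lub A le {x, y}"

definition pcompl :: "'b set \<Rightarrow> ('b \<Rightarrow> 'b \<Rightarrow> bool) \<Rightarrow> 'b \<Rightarrow> 'b" where
  "pcompl A le x = lub A le {y \<in> A. meet A le x y = bot_el A le}"

definition booleanization :: "'b set \<Rightarrow> ('b \<Rightarrow> 'b \<Rightarrow> bool) \<Rightarrow> 'b set" where
  "booleanization A le = {x \<in> A. pcompl A le (pcompl A le x) = x}"

text \<open>A homomorphism f from L(IR-bar) into a frame M is given by its values on the generators:
  u r = f(r,---) and d s = f(---,s), subject to relations (r1), (r3), (r4) holding in M.\<close>
definition LIR_hom :: "'b set \<Rightarrow> ('b \<Rightarrow> 'b \<Rightarrow> bool) \<Rightarrow> (rat \<Rightarrow> 'b) \<times> (rat \<Rightarrow> 'b) \<Rightarrow> bool" where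
  "LIR_hom A le f \<longleftrightarrow>
     (\<forall>r. fst f r \<in> A) \<and> (\<forall>s. snd f s \<in> A) \<and>
     (\<forall>r s. r \<ge> s \<longrightarrow> meet A le (fst f r) (snd f s) = bot_el A le) \<and>
     (\<forall>r. fst f r = lub A le {fst f s | s. s > r}) \<and>
     (\<forall>s. snd f s = lub A le {snd f r | r. r < s})"

definition hom_le :: "('b \<Rightarrow> 'b \<Rightarrow> bool) \<Rightarrow> (rat \<Rightarrow> 'b) \<times> (rat \<Rightarrow> 'b) \<Rightarrow> (rat \<Rightarrow> 'b) \<times> (rat \<Rightarrow> 'b) \<Rightarrow> bool" where
  "hom_le le f g \<longleftrightarrow> (\<forall>r. le (fst f r) (fst g r)) \<and> (\<forall>s. le (snd g s) (snd f s))"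

definition C_frame :: "'b set \<Rightarrow> ('b \<Rightarrow> 'b \<Rightarrow> bool) \<Rightarrow> ((rat \<Rightarrow> 'b) \<times> (rat \<Rightarrow> 'b)) set" where
  "C_frame A le = {f. LIR_hom A le f \<and>
     (\<forall>r s. r < s \<longrightarrow> join A le (fst f r) (snd f s) = top_el A le) \<and>
     lub A le (range (fst f)) = top_el A le \<and>
     lub A le (range (snd f)) = top_el A le}"

definition is_frame :: "'a::complete_lattice itself \<Rightarrow> bool" where
  "is_frame _ \<longleftrightarrow> (\<forall>(a::'a) B. inf a (Sup B) = Sup ((inf a) ` B))"

definition frame_imp :: "'a::complete_lattice \<Rightarrow> 'a \<Rightarrow> 'a" where
  "frame_imp x s = Sup {y. inf y x \<le> s}"

definition is_sublocale :: "'a::complete_lattice set \<Rightarrow> bool" where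
  "is_sublocale S \<longleftrightarrow> (\<forall>T. T \<subseteq> S \<longrightarrow> Inf T \<in> S) \<and> (\<forall>x. \<forall>s\<in>S. frame_imp x s \<in> S)"

definition coS :: "'a::complete_lattice set set" where
  "coS = {S. is_sublocale S}"

definition coS_le :: "'a set \<Rightarrow> 'a set \<Rightarrow> bool" where
  "coS_le S T \<longleftrightarrow> T \<subseteq> S"

definition Fbar :: "((rat \<Rightarrow> 'a::complete_lattice set) \<times> (rat \<Rightarrow> 'a set)) set" where
  "Fbar = {f. LIR_hom coS coS_le f \<and>
     (\<forall>r s. r < s \<longrightarrow> coS_le (pcompl coS coS_le (fst f r)) (snd f s)
                    \<and> coS_le (pcompl coS coS_le (snd f s)) (fst f r))}"

definition PInf :: "(rat \<Rightarrow> 'a::complete_lattice set) \<times> (rat \<Rightarrow> 'a set)" where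
  "PInf = (\<lambda>_. top_el coS coS_le, \<lambda>_. bot_el coS coS_le)"

definition MInf :: "(rat \<Rightarrow> 'a::complete_lattice set) \<times> (rat \<Rightarrow> 'a set)" where
  "MInf = (\<lambda>_. bot_el coS coS_le, \<lambda>_. top_el coS coS_le)"

definition FL :: "((rat \<Rightarrow> 'a::complete_lattice set) \<times> (rat \<Rightarrow> 'a set)) set" where
  "FL = {f \<in> Fbar. \<forall>g \<in> Fbar.
      (lub Fbar (hom_le coS_le) {f, g} = PInf \<longrightarrow> g = PInf) \<and>
      (glb Fbar (hom_le coS_le) {f, g} = MInf \<longrightarrow> g = MInf)}"

definition beta :: "'a::complete_lattice set \<Rightarrow> 'a set" where
  "beta S = pcompl coS coS_le (pcompl coS coS_le S)"

definition beta_comp :: "(rat \<Rightarrow> 'a::complete_lattice set) \<times> (rat \<Rightarrow> 'a set)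
    \<Rightarrow> (rat \<Rightarrow> 'a set) \<times> (rat \<Rightarrow> 'a set)" where
  "beta_comp f = (\<lambda>r. beta (fst f r), \<lambda>s. beta (snd f s))"

end

theory Submission
  imports Defs
begin



lemma sublocale_Inter: "(\<forall>S\<in>F. is_sublocale S) \<Longrightarrow> is_sublocale (\<Inter>F)"
  unfolding is_sublocale_def
proof (intro conjI allI impI ballI)
  fix T assume "\<forall>S\<in>F. (\<forall>T. T \<subseteq> S \<longrightarrow> Inf T \<in> S) \<and> (\<forall>x. \<forall>s\<in>S. frame_imp x s \<in> S)" "T \<subseteq> \<Inter>F"
  then show "Inf T \<in> \<Inter>F" by (meson Inter_iff le_Inf_iff)
next
  fix x s assume "\<forall>S\<in>F. (\<forall>T. T \<subseteq> S \<longrightarrow> Inf T \<in> S) \<and> (\<forall>x. \<forall>s\<in>S. frame_imp x s \<in> S)" "s \<in> \<Inter>F"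
  then show "frame_imp x s \<in> \<Inter>F" by auto
qed

lemma coS_Inter: "F \<subseteq> coS \<Longrightarrow> \<Inter>F \<in> coS"
  using sublocale_Inter unfolding coS_def by blast

lemma UNIV_coS: "UNIV \<in> coS"
  using coS_Inter[of "{}"] by simp

typedef (overloaded) ('a::complete_lattice) csl = "coS :: 'a set set" morphisms R Ab
  using UNIV_coS by blast

lemma R_Ab_Inter: "F \<subseteq> coS \<Longrightarrow> R (Ab (\<Inter>F)) = \<Inter>F"
  by (simp add: Ab_inverse coS_Inter)

instantiation csl :: (complete_lattice) complete_lattice
begin
definition "less_eq_csl x y \<longleftrightarrow> R y \<subseteq> R x"
definition "less_csl x y \<longleftrightarrow> R y \<subset> R x"
definition "Sup_csl X = Ab (\<Inter> (R ` X))"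
definition "Inf_csl X = Ab (\<Inter> {S \<in> coS. \<Union>(R ` X) \<subseteq> S})"
definition "sup_csl x y = Ab (R x \<inter> R y)"
definition "inf_csl x y = Ab (\<Inter> {S \<in> coS. R x \<union> R y \<subseteq> S})"
definition "bot_csl = Ab UNIV"
definition "top_csl = Ab (\<Inter> coS)"

lemma R_Sup_csl: "R (Sup X) = \<Inter> (R ` X)"
  unfolding Sup_csl_def by (rule R_Ab_Inter) (use R in blast)
lemma R_Inf_csl: "R (Inf X) = \<Inter> {S \<in> coS. \<Union>(R ` X) \<subseteq> S}"
  unfolding Inf_csl_def by (rule R_Ab_Inter) blast
lemma R_sup_csl: "R (sup x y) = R x \<inter> R y"
  unfolding sup_csl_def using R_Ab_Inter[of "{R x, R y}"] R by auto
lemma R_inf_csl: "R (inf x y) = \<Inter> {S \<in> coS. R x \<union> R y \<subseteq> S}"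
  unfolding inf_csl_def by (rule R_Ab_Inter) blast
lemma R_bot_csl: "R bot = UNIV"
  unfolding bot_csl_def using UNIV_coS Ab_inverse by blast
lemma R_top_csl: "R top = \<Inter> coS"
  unfolding top_csl_def by (rule R_Ab_Inter) blast

instance
proof
  show "(x < y) = (x \<le> y \<and> \<not> y \<le> x)" for x y :: "'a csl"
    unfolding less_eq_csl_def less_csl_def by blast
  show "x \<le> x" for x :: "'a csl" unfolding less_eq_csl_def by blast
  show "x \<le> y \<Longrightarrow> y \<le> z \<Longrightarrow> x \<le> z" for x y z :: "'a csl" unfolding less_eq_csl_def by blast
  show "x \<le> y \<Longrightarrow> y \<le> x \<Longrightarrow> x = y" for x y :: "'a csl" unfolding less_eq_csl_def using R_inject by blast
  show "inf x y \<le> x" for x y :: "'a csl" unfolding less_eq_csl_def R_inf_csl using R by blast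
  show "inf x y \<le> y" for x y :: "'a csl" unfolding less_eq_csl_def R_inf_csl using R by blast
  show "x \<le> y \<Longrightarrow> x \<le> z \<Longrightarrow> x \<le> inf y z" for x y z :: "'a csl" unfolding less_eq_csl_def R_inf_csl using R by blast
  show "x \<le> sup x y" for x y :: "'a csl" unfolding less_eq_csl_def R_sup_csl by blast
  show "y \<le> sup x y" for x y :: "'a csl" unfolding less_eq_csl_def R_sup_csl by blast
  show "y \<le> x \<Longrightarrow> z \<le> x \<Longrightarrow> sup y z \<le> x" for x y z :: "'a csl" unfolding less_eq_csl_def R_sup_csl by blast
  show "x \<in> A \<Longrightarrow> Inf A \<le> x" for x :: "'a csl" and A unfolding less_eq_csl_def R_Inf_csl using R by blast
  show "(\<And>x. x \<in> A \<Longrightarrow> z \<le> x) \<Longrightarrow> z \<le> Inf A" for z :: "'a csl" and A unfolding less_eq_csl_def R_Inf_csl using R by blast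
  show "x \<in> A \<Longrightarrow> x \<le> Sup A" for x :: "'a csl" and A unfolding less_eq_csl_def R_Sup_csl by blast
  show "(\<And>x. x \<in> A \<Longrightarrow> x \<le> z) \<Longrightarrow> Sup A \<le> z" for z :: "'a csl" and A unfolding less_eq_csl_def R_Sup_csl by blast
  show "Inf {} = (top :: 'a csl)" unfolding Inf_csl_def top_csl_def by simp
  show "Sup {} = (bot :: 'a csl)" unfolding Sup_csl_def bot_csl_def by simp
qed
end



lemma setc_image: "{F s | s. P s} = F ` {s. P s}" by auto

lemma lub_eqI:
  assumes "\<And>x y. x \<in> A \<Longrightarrow> y \<in> A \<Longrightarrow> le x y \<Longrightarrow> le y x \<Longrightarrow> x = y"
    and "is_lub A le X u"
  shows "lub A le X = u"
  unfolding lub_def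
proof (rule the_equality)
  show "is_lub A le X u" by fact
  fix v assume "is_lub A le X v"
  with assms show "v = u" unfolding is_lub_def by metis
qed

lemma glb_eqI:
  assumes "\<And>x y. x \<in> A \<Longrightarrow> y \<in> A \<Longrightarrow> le x y \<Longrightarrow> le y x \<Longrightarrow> x = y"
    and "is_glb A le X u"
  shows "glb A le X = u"
  unfolding glb_def
proof (rule the_equality)
  show "is_glb A le X u" by fact
  fix v assume "is_glb A le X v"
  with assms show "v = u" unfolding is_glb_def by metis
qed

lemma hom_le_antisym:
  fixes f g :: "(rat \<Rightarrow> 'b::order) \<times> (rat \<Rightarrow> 'b)"
  shows "hom_le (\<le>) f g \<Longrightarrow> hom_le (\<le>) g f \<Longrightarrow> f = g"
  unfolding hom_le_def by (metis order.antisym prod_eqI ext)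

lemma Sup_setc_upper: "P s \<Longrightarrow> (F s::'b::complete_lattice) \<le> Sup {F t | t. P t}"
  by (rule Sup_upper) auto

lemma Sup_setc_least: "(\<And>t. P t \<Longrightarrow> (F t::'b::complete_lattice) \<le> a) \<Longrightarrow> Sup {F t | t. P t} \<le> a"
  by (rule Sup_least) auto

lemma Sup_setc_mono: "(\<And>t. P t \<Longrightarrow> \<exists>t'. Q t' \<and> (F t::'b::complete_lattice) \<le> G t') \<Longrightarrow> Sup {F t | t. P t} \<le> Sup {G t | t. Q t}"
proof (rule Sup_setc_least)
  fix t assume "P t" "\<And>t. P t \<Longrightarrow> \<exists>t'. Q t' \<and> F t \<le> G t'"
  then obtain t' where "Q t'" "F t \<le> G t'" by blast
  then show "F t \<le> Sup {G t | t. Q t}" using Sup_setc_upper[of Q t' G] by (rule_tac order.trans)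
qed

lemma rat_between: "(r::rat) < t \<Longrightarrow> r < (r + t) / 2 \<and> (r + t) / 2 < t"
  by (simp add: field_simps)

locale frm =
  fixes tp :: "'b::complete_lattice itself"
  assumes law: "\<And>(a::'b) B. inf a (Sup B) = Sup ((inf a) ` B)"
begin

definition pc :: "'b \<Rightarrow> 'b" where
  "pc x = Sup {y. inf x y = bot}"

lemma pc_meet: "inf x (pc x) = bot"
  unfolding pc_def law by (auto intro: Sup_eqI)

lemma le_pc_iff: "y \<le> pc x \<longleftrightarrow> inf x y = bot"
proof
  assume "y \<le> pc x"
  then have "inf x y \<le> inf x (pc x)" by (simp add: inf.coboundedI2)
  then show "inf x y = bot" using pc_meet by (simp add: bot_unique)
next
  assume "inf x y = bot" then show "y \<le> pc x" unfolding pc_def by (auto intro: Sup_upper)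
qed

lemma pc_anti: "x \<le> y \<Longrightarrow> pc y \<le> pc x"
proof -
  assume "x \<le> y"
  then have "inf x (pc y) \<le> inf y (pc y)" by (rule inf_mono) simp
  then have "inf x (pc y) = bot" by (simp add: pc_meet bot_unique)
  then show ?thesis by (simp add: le_pc_iff)
qed

lemma pcpc_ge: "x \<le> pc (pc x)"
  by (simp add: le_pc_iff inf_commute pc_meet)

lemma pc3: "pc (pc (pc x)) = pc x"
  by (simp add: order.antisym pc_anti pcpc_ge)

lemma pcpc_mono: "x \<le> y \<Longrightarrow> pc (pc x) \<le> pc (pc y)"
  by (simp add: pc_anti)

lemma pc_bot: "pc bot = top"
  by (rule top_unique[THEN iffD1]) (simp add: le_pc_iff)

lemma pc_top: "pc top = bot"
  using pc_meet[of top] by simp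

lemma pcpc_bot: "pc (pc bot) = bot" by (simp add: pc_bot pc_top)
lemma pcpc_top: "pc (pc top) = top" by (simp add: pc_bot pc_top)

lemma distrib: "inf (a::'b) (sup b c) = sup (inf a b) (inf a c)"
  using law[of a "{b,c}"] by simp

lemma pc_sup: "pc (sup x y) = inf (pc x) (pc y)"
proof (rule order.antisym)
  show "pc (sup x y) \<le> inf (pc x) (pc y)" by (simp add: pc_anti)
  let ?q = "inf (pc x) (pc y)"
  have a: "inf ?q x = bot"
  proof -
    have "inf ?q x \<le> inf (pc x) x" by (rule inf_mono) simp_all
    then show ?thesis by (simp add: inf_commute pc_meet bot_unique)
  qed
  have b: "inf ?q y = bot"
  proof -
    have "inf ?q y \<le> inf (pc y) y" by (rule inf_mono) simp_all
    then show ?thesis by (simp add: inf_commute pc_meet bot_unique)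
  qed
  have "inf ?q (sup x y) = sup (inf ?q x) (inf ?q y)" by (rule distrib)
  then have "inf (sup x y) ?q = bot" using a b by (simp add: inf_commute)
  then show "inf (pc x) (pc y) \<le> pc (sup x y)" by (simp add: le_pc_iff)
qed

lemma pc_Sup: "pc (Sup X) = Inf (pc ` X)"
proof (rule order.antisym)
  show "pc (Sup X) \<le> Inf (pc ` X)" by (simp add: le_INF_iff pc_anti Sup_upper)
  have "inf (Inf (pc ` X)) (Sup X) = Sup (inf (Inf (pc ` X)) ` X)" by (rule law)
  also have "\<dots> = bot"
  proof -
    have "inf (Inf (pc ` X)) x = bot" if "x \<in> X" for x
    proof -
      have "inf (Inf (pc ` X)) x \<le> inf (pc x) x" using that by (simp add: INF_lower inf.coboundedI1)
      then show ?thesis using pc_meet by (simp add: inf_commute bot_unique)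
    qed
    then show ?thesis by (simp add: SUP_bot_conv)
  qed
  finally show "Inf (pc ` X) \<le> pc (Sup X)" by (simp add: le_pc_iff inf_commute)
qed

lemma disjoint_pcpc: "inf x y = bot \<Longrightarrow> inf (pc (pc x)) (pc (pc y)) = bot"
  by (metis le_pc_iff pc3 pc_anti)

lemma pcpc_inf: "pc (pc (inf x y)) = inf (pc (pc x)) (pc (pc y))"
proof (rule order.antisym)
  show "pc (pc (inf x y)) \<le> inf (pc (pc x)) (pc (pc y))" by (simp add: pcpc_mono)
  let ?p = "pc (inf x y)"
  have 1: "inf (inf x y) ?p = bot" by (rule pc_meet)
  have "inf x (inf y ?p) = bot" using 1 by (simp only: inf_assoc)
  then have "inf y ?p \<le> pc x" by (simp only: le_pc_iff)
  then have "inf y ?p \<le> pc (pc (pc x))" by (simp only: pc3)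
  then have 2: "inf (pc (pc x)) (inf y ?p) = bot" by (simp only: le_pc_iff)
  have "inf y (inf (pc (pc x)) ?p) = bot" using 2 by (simp only: inf_left_commute)
  then have "inf (pc (pc x)) ?p \<le> pc y" by (simp only: le_pc_iff)
  then have "inf (pc (pc x)) ?p \<le> pc (pc (pc y))" by (simp only: pc3)
  then have "inf (pc (pc y)) (inf (pc (pc x)) ?p) = bot" by (simp only: le_pc_iff)
  then have "inf (inf (pc (pc x)) (pc (pc y))) ?p = bot" by (simp only: inf_assoc inf_left_commute inf_commute)
  then show "inf (pc (pc x)) (pc (pc y)) \<le> pc (pc (inf x y))"
    by (simp only: le_pc_iff inf_commute)
qed

definition Bg :: "'b set" where "Bg = {x. pc (pc x) = x}"

lemma pc_in_Bg: "pc x \<in> Bg" by (simp add: Bg_def pc3)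
lemma pcpc_in_Bg: "pc (pc x) \<in> Bg" by (simp add: Bg_def pc3)

lemma is_lub_Bg: "X \<subseteq> Bg \<Longrightarrow> is_lub Bg (\<le>) X (pc (pc (Sup X)))"
  unfolding is_lub_def
proof (intro conjI ballI impI)
  show "pc (pc (Sup X)) \<in> Bg" by (rule pcpc_in_Bg)
  fix x assume "x \<in> X" then show "x \<le> pc (pc (Sup X))"
    by (rule order.trans[OF Sup_upper pcpc_ge])
next
  fix v assume "X \<subseteq> Bg" "v \<in> Bg" "\<forall>x\<in>X. x \<le> v"
  then have "pc (pc (Sup X)) \<le> pc (pc v)" by (simp add: Sup_least pcpc_mono)
  then show "pc (pc (Sup X)) \<le> v" using \<open>v \<in> Bg\<close> by (simp add: Bg_def)
qed

lemma inf_Bg: "x \<in> Bg \<Longrightarrow> y \<in> Bg \<Longrightarrow> inf x y \<in> Bg"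
  unfolding Bg_def by (simp add: pcpc_inf)

lemma bot_Bg: "bot \<in> Bg" by (simp add: Bg_def pcpc_bot)
lemma top_Bg: "top \<in> Bg" by (simp add: Bg_def pcpc_top)

lemma inf_Sup_Sup_le:
  assumes "\<And>a b. a \<in> A \<Longrightarrow> b \<in> B \<Longrightarrow> inf a b \<le> (c::'b)"
  shows "inf (Sup A) (Sup B) \<le> c"
proof -
  have "inf (Sup A) (Sup B) = Sup (inf (Sup A) ` B)" by (rule law)
  also have "\<dots> \<le> c"
  proof (rule Sup_least)
    fix x assume "x \<in> inf (Sup A) ` B"
    then obtain b where b: "b \<in> B" "x = inf (Sup A) b" by blast
    have "inf b (Sup A) = Sup (inf b ` A)" by (rule law)
    also have "\<dots> \<le> c" using assms b(1) by (auto intro!: Sup_least simp: inf_commute)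
    finally show "x \<le> c" using b(2) by (simp add: inf_commute)
  qed
  finally show ?thesis .
qed

lemma pcpc_idem: "pc (pc (pc (pc x))) = pc (pc x)" by (simp add: pc3)

lemma Bg_pcpc: "x \<in> Bg \<Longrightarrow> pc (pc x) = x" by (simp add: Bg_def)

definition FbM :: "((rat \<Rightarrow> 'b) \<times> (rat \<Rightarrow> 'b)) set" where
  "FbM = {f. (\<forall>r s. r \<ge> s \<longrightarrow> inf (fst f r) (snd f s) = bot)
     \<and> (\<forall>r. fst f r = Sup {fst f s | s. s > r})
     \<and> (\<forall>s. snd f s = Sup {snd f r | r. r < s})
     \<and> (\<forall>r s. r < s \<longrightarrow> pc (fst f r) \<le> snd f s \<and> pc (snd f s) \<le> fst f r)}"

definition CbarM :: "((rat \<Rightarrow> 'b) \<times> (rat \<Rightarrow> 'b)) set" where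
  "CbarM = {f. (\<forall>r. fst f r \<in> Bg) \<and> (\<forall>s. snd f s \<in> Bg)
     \<and> (\<forall>r s. r \<ge> s \<longrightarrow> inf (fst f r) (snd f s) = bot)
     \<and> (\<forall>r. fst f r = pc (pc (Sup {fst f s | s. s > r})))
     \<and> (\<forall>s. snd f s = pc (pc (Sup {snd f r | r. r < s})))
     \<and> (\<forall>r s. r < s \<longrightarrow> pc (pc (sup (fst f r) (snd f s))) = top)}"

definition CbM :: "((rat \<Rightarrow> 'b) \<times> (rat \<Rightarrow> 'b)) set" where
  "CbM = {f \<in> CbarM. pc (pc (Sup (range (fst f)))) = top \<and> pc (pc (Sup (range (snd f)))) = top}"

definition betaM :: "(rat \<Rightarrow> 'b) \<times> (rat \<Rightarrow> 'b) \<Rightarrow> (rat \<Rightarrow> 'b) \<times> (rat \<Rightarrow> 'b)" where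
  "betaM f = (\<lambda>r. pc (pc (fst f r)), \<lambda>s. pc (pc (snd f s)))"

definition Phi :: "(rat \<Rightarrow> 'b) \<times> (rat \<Rightarrow> 'b) \<Rightarrow> (rat \<Rightarrow> 'b) \<times> (rat \<Rightarrow> 'b)" where
  "Phi f = (\<lambda>r. Sup {pc (snd f s) | s. s > r}, \<lambda>s. Sup {pc (fst f r) | r. r < s})"

definition PM :: "(rat \<Rightarrow> 'b) \<times> (rat \<Rightarrow> 'b)" where "PM = (\<lambda>_. top, \<lambda>_. bot)"
definition MM :: "(rat \<Rightarrow> 'b) \<times> (rat \<Rightarrow> 'b)" where "MM = (\<lambda>_. bot, \<lambda>_. top)"

definition FLM :: "((rat \<Rightarrow> 'b) \<times> (rat \<Rightarrow> 'b)) set" where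
  "FLM = {f \<in> FbM. \<forall>g \<in> FbM.
      (lub FbM (hom_le (\<le>)) {f, g} = PM \<longrightarrow> g = PM) \<and>
      (glb FbM (hom_le (\<le>)) {f, g} = MM \<longrightarrow> g = MM)}"

lemma FbM_D:
  assumes "f \<in> FbM"
  shows "\<And>r s. r \<ge> s \<Longrightarrow> inf (fst f r) (snd f s) = bot"
    and "\<And>r. fst f r = Sup {fst f s | s. s > r}"
    and "\<And>s. snd f s = Sup {snd f r | r. r < s}"
    and "\<And>r s. r < s \<Longrightarrow> pc (fst f r) \<le> snd f s"
    and "\<And>r s. r < s \<Longrightarrow> pc (snd f s) \<le> fst f r"
  using assms unfolding FbM_def mem_Collect_eq by blast+

lemma CbarM_D:
  assumes "f \<in> CbarM"
  shows "\<And>r. fst f r \<in> Bg" and "\<And>s. snd f s \<in> Bg"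
    and "\<And>r s. r \<ge> s \<Longrightarrow> inf (fst f r) (snd f s) = bot"
    and "\<And>r. fst f r = pc (pc (Sup {fst f s | s. s > r}))"
    and "\<And>s. snd f s = pc (pc (Sup {snd f r | r. r < s}))"
    and "\<And>r s. r < s \<Longrightarrow> pc (pc (sup (fst f r) (snd f s))) = top"
  using assms unfolding CbarM_def mem_Collect_eq by blast+

lemma Fb_mono:
  assumes "f \<in> FbM" "r \<le> s"
  shows "fst f s \<le> fst f r" "snd f r \<le> snd f s"
proof -
  show "fst f s \<le> fst f r"
  proof (cases "r = s")
    case False
    then have "r < s" using assms(2) by simp
    then have "fst f s \<le> Sup {fst f t | t. t > r}" by (rule Sup_setc_upper)
    also have "\<dots> = fst f r" by (rule FbM_D(2)[OF assms(1), symmetric])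
    finally show ?thesis .
  qed simp
  show "snd f r \<le> snd f s"
  proof (cases "r = s")
    case False
    then have "r < s" using assms(2) by simp
    then have "snd f r \<le> Sup {snd f t | t. t < s}" by (rule Sup_setc_upper)
    also have "\<dots> = snd f s" by (rule FbM_D(3)[OF assms(1), symmetric])
    finally show ?thesis .
  qed simp
qed

lemma Cbar_mono:
  assumes "f \<in> CbarM" "r \<le> s"
  shows "fst f s \<le> fst f r" "snd f r \<le> snd f s"
proof -
  show "fst f s \<le> fst f r"
  proof (cases "r = s")
    case False
    then have "r < s" using assms(2) by simp
    then have "fst f s \<le> Sup {fst f t | t. t > r}" by (rule Sup_setc_upper)
    also have "\<dots> \<le> pc (pc (Sup {fst f t | t. t > r}))" by (rule pcpc_ge)
    also have "\<dots> = fst f r" by (rule CbarM_D(4)[OF assms(1), symmetric])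
    finally show ?thesis .
  qed simp
  show "snd f r \<le> snd f s"
  proof (cases "r = s")
    case False
    then have "r < s" using assms(2) by simp
    then have "snd f r \<le> Sup {snd f t | t. t < s}" by (rule Sup_setc_upper)
    also have "\<dots> \<le> pc (pc (Sup {snd f t | t. t < s}))" by (rule pcpc_ge)
    also have "\<dots> = snd f s" by (rule CbarM_D(5)[OF assms(1), symmetric])
    finally show ?thesis .
  qed simp
qed

lemma Fb_u_le_pcd: "f \<in> FbM \<Longrightarrow> fst f s \<le> pc (snd f s)"
  using FbM_D(1)[of f s s] by (simp add: le_pc_iff inf_commute)

lemma Fb_d_le_pcu: "f \<in> FbM \<Longrightarrow> snd f s \<le> pc (fst f s)"
  using FbM_D(1)[of f s s] by (simp add: le_pc_iff)

lemma Fb_repr: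
  assumes "f \<in> FbM"
  shows "fst f r = Sup {pc (snd f s) | s. s > r}" "snd f s = Sup {pc (fst f r) | r. r < s}"
proof -
  show "fst f r = Sup {pc (snd f s) | s. s > r}"
  proof (rule order.antisym)
    have "Sup {fst f s | s. s > r} \<le> Sup {pc (snd f s) | s. s > r}"
      by (rule Sup_setc_mono) (use Fb_u_le_pcd[OF assms] in blast)
    then show "fst f r \<le> Sup {pc (snd f s) | s. s > r}" by (subst FbM_D(2)[OF assms, of r])
    show "Sup {pc (snd f s) | s. s > r} \<le> fst f r"
      by (rule Sup_setc_least) (rule FbM_D(5)[OF assms])
  qed
  show "snd f s = Sup {pc (fst f r) | r. r < s}"
  proof (rule order.antisym)
    have "Sup {snd f r | r. r < s} \<le> Sup {pc (fst f r) | r. r < s}"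
      by (rule Sup_setc_mono) (use Fb_d_le_pcu[OF assms] in blast)
    then show "snd f s \<le> Sup {pc (fst f r) | r. r < s}" by (subst FbM_D(3)[OF assms, of s])
    show "Sup {pc (fst f r) | r. r < s} \<le> snd f s"
      by (rule Sup_setc_least) (rule FbM_D(4)[OF assms])
  qed
qed

lemma Fb_beta:
  assumes f: "f \<in> FbM"
  shows "betaM f \<in> CbarM"
proof -
  have A: "\<And>r s. s \<le> r \<Longrightarrow> inf (pc (pc (fst f r))) (pc (pc (snd f s))) = bot"
    using FbM_D(1)[OF f] disjoint_pcpc by blast
  have B: "pc (pc (fst f r)) = pc (pc (Sup {pc (pc (fst f s)) | s. s > r}))" for r
  proof (rule order.antisym)
    have "fst f r \<le> Sup {pc (pc (fst f s)) | s. s > r}"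
    proof -
      have "Sup {fst f s | s. s > r} \<le> Sup {pc (pc (fst f s)) | s. s > r}"
        by (rule Sup_setc_mono) (use pcpc_ge in blast)
      then show ?thesis by (subst FbM_D(2)[OF f])
    qed
    then show "pc (pc (fst f r)) \<le> pc (pc (Sup {pc (pc (fst f s)) | s. s > r}))" by (rule pcpc_mono)
    have le: "Sup {pc (pc (fst f s)) | s. s > r} \<le> pc (pc (fst f r))"
      by (rule Sup_setc_least) (simp add: pcpc_mono Fb_mono[OF f])
    show "pc (pc (Sup {pc (pc (fst f s)) | s. s > r})) \<le> pc (pc (fst f r))"
      using pcpc_mono[OF le] by (simp only: pcpc_idem)
  qed
  have C: "pc (pc (snd f s)) = pc (pc (Sup {pc (pc (snd f r)) | r. r < s}))" for s
  proof (rule order.antisym)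
    have "snd f s \<le> Sup {pc (pc (snd f r)) | r. r < s}"
    proof -
      have "Sup {snd f r | r. r < s} \<le> Sup {pc (pc (snd f r)) | r. r < s}"
        by (rule Sup_setc_mono) (use pcpc_ge in blast)
      then show ?thesis by (subst FbM_D(3)[OF f])
    qed
    then show "pc (pc (snd f s)) \<le> pc (pc (Sup {pc (pc (snd f r)) | r. r < s}))" by (rule pcpc_mono)
    have le: "Sup {pc (pc (snd f r)) | r. r < s} \<le> pc (pc (snd f s))"
      by (rule Sup_setc_least) (simp add: pcpc_mono Fb_mono[OF f])
    show "pc (pc (Sup {pc (pc (snd f r)) | r. r < s})) \<le> pc (pc (snd f s))"
      using pcpc_mono[OF le] by (simp only: pcpc_idem)
  qed
  have D: "pc (pc (sup (pc (pc (fst f r))) (pc (pc (snd f s))))) = top" if "r < s" for r s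
  proof -
    have "pc (sup (pc (pc (fst f r))) (pc (pc (snd f s)))) = inf (pc (fst f r)) (pc (snd f s))"
      by (simp add: pc_sup pc3)
    also have "\<dots> \<le> inf (snd f s) (pc (snd f s))"
      using FbM_D(4)[OF f that] by (rule inf_mono) simp
    also have "\<dots> = bot" by (rule pc_meet)
    finally have "pc (sup (pc (pc (fst f r))) (pc (pc (snd f s)))) = bot" by (simp add: bot_unique)
    then show ?thesis by (simp add: pc_bot)
  qed
  show ?thesis unfolding CbarM_def betaM_def mem_Collect_eq fst_conv snd_conv
    by (intro conjI allI impI; (rule pcpc_in_Bg | rule A | rule B | rule C | rule D)?; assumption?)
qed

lemma Fb_inj:
  assumes "f \<in> FbM" "g \<in> FbM" "betaM f = betaM g"
  shows "f = g"
proof -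
  have u: "pc (pc (fst f r)) = pc (pc (fst g r))" for r
    using assms(3) unfolding betaM_def by (metis fst_conv)
  have d: "pc (pc (snd f s)) = pc (pc (snd g s))" for s
    using assms(3) unfolding betaM_def by (metis snd_conv)
  have u': "pc (fst f r) = pc (fst g r)" for r
  proof -
    have "pc (pc (pc (fst f r))) = pc (pc (pc (fst g r)))" by (simp only: u)
    then show ?thesis by (simp only: pc3)
  qed
  have d': "pc (snd f s) = pc (snd g s)" for s
  proof -
    have "pc (pc (pc (snd f s))) = pc (pc (pc (snd g s)))" by (simp only: d)
    then show ?thesis by (simp only: pc3)
  qed
  have "fst f = fst g"
  proof
    fix r show "fst f r = fst g r"
      by (subst Fb_repr(1)[OF assms(1)], subst Fb_repr(1)[OF assms(2)]) (simp only: d')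
  qed
  moreover have "snd f = snd g"
  proof
    fix s show "snd f s = snd g s"
      by (subst Fb_repr(2)[OF assms(1)], subst Fb_repr(2)[OF assms(2)]) (simp only: u')
  qed
  ultimately show ?thesis by (rule prod_eqI)
qed

lemma Fb_order:
  assumes "f \<in> FbM" "g \<in> FbM"
  shows "hom_le (\<le>) f g \<longleftrightarrow> hom_le (\<le>) (betaM f) (betaM g)"
proof
  assume "hom_le (\<le>) f g"
  then show "hom_le (\<le>) (betaM f) (betaM g)" unfolding hom_le_def betaM_def by (simp add: pcpc_mono)
next
  assume H: "hom_le (\<le>) (betaM f) (betaM g)"
  have u: "pc (pc (fst f r)) \<le> pc (pc (fst g r))" for r using H unfolding hom_le_def betaM_def by simp
  have d: "pc (pc (snd g s)) \<le> pc (pc (snd f s))" for s using H unfolding hom_le_def betaM_def by simp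
  have u': "pc (fst g r) \<le> pc (fst f r)" for r using pc_anti[OF u[of r]] by (simp add: pc3)
  have d': "pc (snd f s) \<le> pc (snd g s)" for s using pc_anti[OF d[of s]] by (simp add: pc3)
  have "fst f r \<le> fst g r" for r
  proof -
    have "Sup {pc (snd f s) | s. s > r} \<le> Sup {pc (snd g s) | s. s > r}"
      by (rule Sup_setc_mono) (use d' in blast)
    then show ?thesis by (subst Fb_repr(1)[OF assms(1)], subst Fb_repr(1)[OF assms(2)])
  qed
  moreover have "snd g s \<le> snd f s" for s
  proof -
    have "Sup {pc (fst g r) | r. r < s} \<le> Sup {pc (fst f r) | r. r < s}"
      by (rule Sup_setc_mono) (use u' in blast)
    then show ?thesis by (subst Fb_repr(2)[OF assms(1)], subst Fb_repr(2)[OF assms(2)])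
  qed
  ultimately show "hom_le (\<le>) f g" unfolding hom_le_def by blast
qed

lemma Cbar_key:
  assumes phi: "\<phi> \<in> CbarM" and rs: "r < s"
  shows "pc (snd \<phi> s) \<le> fst \<phi> r" "pc (fst \<phi> r) \<le> snd \<phi> s"
proof -
  have "pc (sup (fst \<phi> r) (snd \<phi> s)) = pc (pc (pc (sup (fst \<phi> r) (snd \<phi> s))))" by (simp only: pc3)
  also have "\<dots> = bot" by (simp only: CbarM_D(6)[OF phi rs] pc_top)
  finally have 0: "inf (pc (fst \<phi> r)) (pc (snd \<phi> s)) = bot" by (simp only: pc_sup)
  then have "pc (snd \<phi> s) \<le> pc (pc (fst \<phi> r))" by (simp only: le_pc_iff)
  then show "pc (snd \<phi> s) \<le> fst \<phi> r" by (simp only: Bg_pcpc[OF CbarM_D(1)[OF phi]])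
  from 0 have "pc (fst \<phi> r) \<le> pc (pc (snd \<phi> s))" by (simp only: le_pc_iff inf_commute)
  then show "pc (fst \<phi> r) \<le> snd \<phi> s" by (simp only: Bg_pcpc[OF CbarM_D(2)[OF phi]])
qed

lemma Cbar_u_le_pcd: "\<phi> \<in> CbarM \<Longrightarrow> fst \<phi> s \<le> pc (snd \<phi> s)"
  using CbarM_D(3)[of \<phi> s s] by (simp add: le_pc_iff inf_commute)

lemma Cbar_d_le_pcu: "\<phi> \<in> CbarM \<Longrightarrow> snd \<phi> s \<le> pc (fst \<phi> s)"
  using CbarM_D(3)[of \<phi> s s] by (simp add: le_pc_iff)

lemma Phi_beta:
  assumes phi: "\<phi> \<in> CbarM"
  shows "betaM (Phi \<phi>) = \<phi>"
proof -
  have u: "pc (pc (Sup {pc (snd \<phi> s) | s. s > r})) = fst \<phi> r" for r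
  proof (rule order.antisym)
    have "Sup {pc (snd \<phi> s) | s. s > r} \<le> fst \<phi> r"
      by (rule Sup_setc_least) (rule Cbar_key(1)[OF phi])
    then have "pc (pc (Sup {pc (snd \<phi> s) | s. s > r})) \<le> pc (pc (fst \<phi> r))" by (rule pcpc_mono)
    then show "pc (pc (Sup {pc (snd \<phi> s) | s. s > r})) \<le> fst \<phi> r"
      by (simp only: Bg_pcpc[OF CbarM_D(1)[OF phi]])
    have "Sup {fst \<phi> s | s. s > r} \<le> Sup {pc (snd \<phi> s) | s. s > r}"
      by (rule Sup_setc_mono) (use Cbar_u_le_pcd[OF phi] in blast)
    then have "pc (pc (Sup {fst \<phi> s | s. s > r})) \<le> pc (pc (Sup {pc (snd \<phi> s) | s. s > r}))"
      by (rule pcpc_mono)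
    then show "fst \<phi> r \<le> pc (pc (Sup {pc (snd \<phi> s) | s. s > r}))"
      by (subst CbarM_D(4)[OF phi])
  qed
  have d: "pc (pc (Sup {pc (fst \<phi> r) | r. r < s})) = snd \<phi> s" for s
  proof (rule order.antisym)
    have "Sup {pc (fst \<phi> r) | r. r < s} \<le> snd \<phi> s"
      by (rule Sup_setc_least) (rule Cbar_key(2)[OF phi])
    then have "pc (pc (Sup {pc (fst \<phi> r) | r. r < s})) \<le> pc (pc (snd \<phi> s))" by (rule pcpc_mono)
    then show "pc (pc (Sup {pc (fst \<phi> r) | r. r < s})) \<le> snd \<phi> s"
      by (simp only: Bg_pcpc[OF CbarM_D(2)[OF phi]])
    have "Sup {snd \<phi> r | r. r < s} \<le> Sup {pc (fst \<phi> r) | r. r < s}"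
      by (rule Sup_setc_mono) (use Cbar_d_le_pcu[OF phi] in blast)
    then have "pc (pc (Sup {snd \<phi> r | r. r < s})) \<le> pc (pc (Sup {pc (fst \<phi> r) | r. r < s}))"
      by (rule pcpc_mono)
    then show "snd \<phi> s \<le> pc (pc (Sup {pc (fst \<phi> r) | r. r < s}))"
      by (subst CbarM_D(5)[OF phi])
  qed
  show ?thesis unfolding betaM_def Phi_def fst_conv snd_conv
    by (rule prod_eqI) (simp_all only: fst_conv snd_conv u d)
qed

lemma Phi_Fb:
  assumes phi: "\<phi> \<in> CbarM"
  shows "Phi \<phi> \<in> FbM"
proof -
  let ?U = "fst \<phi>" and ?D = "snd \<phi>"
  define u where "u r = Sup {pc (?D s) | s. s > r}" for r
  define d where "d s = Sup {pc (?U r) | r. r < s}" for s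
  have Pe: "Phi \<phi> = (u, d)" unfolding Phi_def u_def d_def by simp
  have bu: "pc (pc (u r)) = ?U r" for r
    using arg_cong[OF Phi_beta[OF phi], of "\<lambda>f. fst f r"] unfolding Pe betaM_def by simp
  have bd: "pc (pc (d s)) = ?D s" for s
    using arg_cong[OF Phi_beta[OF phi], of "\<lambda>f. snd f s"] unfolding Pe betaM_def by simp
  have pu: "pc (u r) = pc (?U r)" for r
  proof -
    have "pc (u r) = pc (pc (pc (u r)))" by (simp only: pc3)
    then show ?thesis by (simp only: bu)
  qed
  have pd: "pc (d s) = pc (?D s)" for s
  proof -
    have "pc (d s) = pc (pc (pc (d s)))" by (simp only: pc3)
    then show ?thesis by (simp only: bd)
  qed
  have r1: "inf (u r) (d s) = bot" if "s \<le> r" for r s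
  proof -
    have "d s \<le> pc (?U r)" unfolding d_def
    proof (rule Sup_setc_least)
      fix r' assume "r' < s"
      then have "?U r \<le> ?U r'" using Cbar_mono(1)[OF phi, of r' r] that by simp
      then show "pc (?U r') \<le> pc (?U r)" by (rule pc_anti)
    qed
    then have "d s \<le> pc (u r)" by (simp only: pu)
    then show ?thesis by (simp only: le_pc_iff)
  qed
  have r3: "u r = Sup {u s | s. s > r}" for r
  proof (rule order.antisym)
    show "u r \<le> Sup {u s | s. s > r}" unfolding u_def[of r]
    proof (rule Sup_setc_least)
      fix t assume "r < t"
      define m where "m = (r + t) / 2"
      have m: "r < m" "m < t" using rat_between[OF \<open>r < t\<close>] unfolding m_def by auto
      have "pc (?D t) \<le> u m" unfolding u_def using m(2) by (rule Sup_setc_upper)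
      also have "\<dots> \<le> Sup {u s | s. s > r}" using m(1) by (rule Sup_setc_upper)
      finally show "pc (?D t) \<le> Sup {u s | s. s > r}" .
    qed
    show "Sup {u s | s. s > r} \<le> u r"
    proof (rule Sup_setc_least)
      fix s assume "r < s"
      show "u s \<le> u r" unfolding u_def
      proof (rule Sup_setc_mono)
        fix t assume "s < t"
        then show "\<exists>t'. r < t' \<and> pc (?D t) \<le> pc (?D t')" using \<open>r < s\<close> by (intro exI[of _ t]) simp
      qed
    qed
  qed
  have r4: "d s = Sup {d r | r. r < s}" for s
  proof (rule order.antisym)
    show "d s \<le> Sup {d r | r. r < s}" unfolding d_def[of s]
    proof (rule Sup_setc_least)
      fix t assume "t < s"
      define m where "m = (t + s) / 2"
      have m: "t < m" "m < s" using rat_between[OF \<open>t < s\<close>] unfolding m_def by auto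
      have "pc (?U t) \<le> d m" unfolding d_def using m(1) by (rule Sup_setc_upper)
      also have "\<dots> \<le> Sup {d r | r. r < s}" using m(2) by (rule Sup_setc_upper)
      finally show "pc (?U t) \<le> Sup {d r | r. r < s}" .
    qed
    show "Sup {d r | r. r < s} \<le> d s"
    proof (rule Sup_setc_least)
      fix r assume "r < s"
      show "d r \<le> d s" unfolding d_def
      proof (rule Sup_setc_mono)
        fix t assume "t < r"
        then show "\<exists>t'. t' < s \<and> pc (?U t) \<le> pc (?U t')" using \<open>r < s\<close> by (intro exI[of _ t]) simp
      qed
    qed
  qed
  have c4: "pc (u r) \<le> d s \<and> pc (d s) \<le> u r" if "r < s" for r s
  proof
    define m where "m = (r + s) / 2"
    have m: "r < m" "m < s" using rat_between[OF \<open>r < s\<close>] unfolding m_def by auto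
    have "pc (u r) = pc (?U r)" by (rule pu)
    also have "\<dots> \<le> pc (?U m)" using Cbar_mono(1)[OF phi, of r m] m(1) by (simp add: pc_anti)
    also have "\<dots> \<le> d s" unfolding d_def using m(2) by (rule Sup_setc_upper)
    finally show "pc (u r) \<le> d s" .
    have "pc (d s) = pc (?D s)" by (rule pd)
    also have "\<dots> \<le> pc (?D m)" using Cbar_mono(2)[OF phi, of m s] m(2) by (simp add: pc_anti)
    also have "\<dots> \<le> u r" unfolding u_def using m(1) by (rule Sup_setc_upper)
    finally show "pc (d s) \<le> u r" .
  qed
  show ?thesis unfolding Pe FbM_def mem_Collect_eq fst_conv snd_conv
    by (intro conjI allI impI; (rule r1 | rule r3 | rule r4 | rule c4[THEN conjunct1] | rule c4[THEN conjunct2]); assumption)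
qed

definition Jn :: "(rat \<Rightarrow> 'b) \<times> (rat \<Rightarrow> 'b) \<Rightarrow> (rat \<Rightarrow> 'b) \<times> (rat \<Rightarrow> 'b) \<Rightarrow> (rat \<Rightarrow> 'b) \<times> (rat \<Rightarrow> 'b)" where
  "Jn f g = (\<lambda>r. pc (pc (sup (fst f r) (fst g r))), \<lambda>s. inf (pc (pc (snd f s))) (pc (pc (snd g s))))"

definition Mt :: "(rat \<Rightarrow> 'b) \<times> (rat \<Rightarrow> 'b) \<Rightarrow> (rat \<Rightarrow> 'b) \<times> (rat \<Rightarrow> 'b) \<Rightarrow> (rat \<Rightarrow> 'b) \<times> (rat \<Rightarrow> 'b)" where
  "Mt f g = (\<lambda>r. inf (pc (pc (fst f r))) (pc (pc (fst g r))), \<lambda>s. pc (pc (sup (snd f s) (snd g s))))"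

lemma pcpc_of_pc: "pc (pc (pc x)) = pc x" by (rule pc3)

lemma Fb_pcpcd_le: "f \<in> FbM \<Longrightarrow> s \<le> r \<Longrightarrow> pc (pc (snd f s)) \<le> pc (fst f r)"
proof -
  assume f: "f \<in> FbM" and "s \<le> r"
  then have "snd f s \<le> pc (fst f r)" using FbM_D(1)[OF f] by (simp add: le_pc_iff)
  then have "pc (pc (snd f s)) \<le> pc (pc (pc (fst f r)))" by (rule pcpc_mono)
  then show ?thesis by (simp only: pc3)
qed

lemma Fb_pcpcu_le: "f \<in> FbM \<Longrightarrow> s \<le> r \<Longrightarrow> pc (pc (fst f r)) \<le> pc (snd f s)"
proof -
  assume f: "f \<in> FbM" and "s \<le> r"
  then have "fst f r \<le> pc (snd f s)" using FbM_D(1)[OF f] by (simp add: le_pc_iff inf_commute)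
  then have "pc (pc (fst f r)) \<le> pc (pc (pc (snd f s)))" by (rule pcpc_mono)
  then show ?thesis by (simp only: pc3)
qed

lemma pc_top_of_bot: "pc x = bot \<Longrightarrow> pc (pc x) = top"
  by (simp add: pc_bot)

lemma Jn_Cbar:
  assumes f: "f \<in> FbM" and g: "g \<in> FbM"
  shows "Jn f g \<in> CbarM"
proof -
  define U where "U r = pc (pc (sup (fst f r) (fst g r)))" for r
  define D where "D s = inf (pc (pc (snd f s))) (pc (pc (snd g s)))" for s
  have Je: "Jn f g = (U, D)" unfolding Jn_def U_def D_def by simp
  have DB: "D s \<in> Bg" for s unfolding D_def by (intro inf_Bg pcpc_in_Bg)
  have D': "D s = pc (pc (inf (snd f s) (snd g s)))" for s unfolding D_def by (simp only: pcpc_inf)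
  have c2: "inf (U r) (D s) = bot" if "s \<le> r" for r s
  proof -
    have "D s \<le> inf (pc (fst f r)) (pc (fst g r))" unfolding D_def
      using Fb_pcpcd_le[OF f that] Fb_pcpcd_le[OF g that] by (rule inf_mono)
    also have "\<dots> = pc (U r)" unfolding U_def by (simp only: pc3 pc_sup pcpc_inf)
    finally show ?thesis by (simp only: le_pc_iff)
  qed
  have c3: "U r = pc (pc (Sup {U s | s. s > r}))" for r
  proof (rule order.antisym)
    have "sup (fst f r) (fst g r) \<le> Sup {U s | s. s > r}"
    proof (rule sup_least)
      have "Sup {fst f s | s. s > r} \<le> Sup {U s | s. s > r}"
      proof (rule Sup_setc_mono)
        fix t assume "r < t"
        have "fst f t \<le> U t" unfolding U_def using pcpc_ge sup_ge1 order.trans by metis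
        then show "\<exists>t'. r < t' \<and> fst f t \<le> U t'" using \<open>r < t\<close> by blast
      qed
      then show "fst f r \<le> Sup {U s | s. s > r}" by (subst FbM_D(2)[OF f])
      have "Sup {fst g s | s. s > r} \<le> Sup {U s | s. s > r}"
      proof (rule Sup_setc_mono)
        fix t assume "r < t"
        have "fst g t \<le> U t" unfolding U_def using pcpc_ge sup_ge2 order.trans by metis
        then show "\<exists>t'. r < t' \<and> fst g t \<le> U t'" using \<open>r < t\<close> by blast
      qed
      then show "fst g r \<le> Sup {U s | s. s > r}" by (subst FbM_D(2)[OF g])
    qed
    then show "U r \<le> pc (pc (Sup {U s | s. s > r}))" unfolding U_def[of r] by (rule pcpc_mono)
    have "Sup {U s | s. s > r} \<le> U r"
    proof (rule Sup_setc_least)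
      fix s assume "r < s"
      then have rs: "r \<le> s" by simp
      have "sup (fst f s) (fst g s) \<le> sup (fst f r) (fst g r)"
        by (rule sup_mono[OF Fb_mono(1)[OF f rs] Fb_mono(1)[OF g rs]])
      then show "U s \<le> U r" unfolding U_def by (rule pcpc_mono)
    qed
    then have "pc (pc (Sup {U s | s. s > r})) \<le> pc (pc (U r))" by (rule pcpc_mono)
    then show "pc (pc (Sup {U s | s. s > r})) \<le> U r" unfolding U_def by (simp only: pcpc_idem)
  qed
  have c4: "D s = pc (pc (Sup {D r | r. r < s}))" for s
  proof (rule order.antisym)
    have "inf (snd f s) (snd g s) \<le> Sup {D r | r. r < s}"
    proof -
      have "inf (Sup {snd f r | r. r < s}) (Sup {snd g r | r. r < s}) \<le> Sup {D r | r. r < s}"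
      proof (rule inf_Sup_Sup_le)
        fix a b assume "a \<in> {snd f r | r. r < s}" "b \<in> {snd g r | r. r < s}"
        then obtain r r' where rr: "a = snd f r" "r < s" "b = snd g r'" "r' < s" by blast
        define m where "m = max r r'"
        have "inf a b \<le> inf (snd f m) (snd g m)" unfolding rr m_def
          by (rule inf_mono) (simp_all add: Fb_mono(2)[OF f] Fb_mono(2)[OF g])
        also have "\<dots> \<le> D m" unfolding D_def by (rule inf_mono) (simp_all add: pcpc_ge)
        also have "\<dots> \<le> Sup {D r | r. r < s}" by (rule Sup_setc_upper) (simp add: m_def rr)
        finally show "inf a b \<le> Sup {D r | r. r < s}" .
      qed
      then show ?thesis by (subst FbM_D(3)[OF f], subst FbM_D(3)[OF g])
    qed
    then have "pc (pc (inf (snd f s) (snd g s))) \<le> pc (pc (Sup {D r | r. r < s}))" by (rule pcpc_mono)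
    then show "D s \<le> pc (pc (Sup {D r | r. r < s}))" by (simp only: D')
    have "Sup {D r | r. r < s} \<le> D s"
    proof (rule Sup_setc_least)
      fix r assume "r < s"
      then have rs: "r \<le> s" by simp
      show "D r \<le> D s" unfolding D_def
        by (rule inf_mono[OF pcpc_mono[OF Fb_mono(2)[OF f rs]] pcpc_mono[OF Fb_mono(2)[OF g rs]]])
    qed
    then have "pc (pc (Sup {D r | r. r < s})) \<le> pc (pc (D s))" by (rule pcpc_mono)
    then show "pc (pc (Sup {D r | r. r < s})) \<le> D s" by (simp only: Bg_pcpc[OF DB])
  qed
  have c5: "pc (pc (sup (U r) (D s))) = top" if "r < s" for r s
  proof (rule pc_top_of_bot)
    have "pc (sup (U r) (D s)) = inf (pc (U r)) (pc (D s))" by (rule pc_sup)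
    also have "pc (U r) = inf (pc (fst f r)) (pc (fst g r))" unfolding U_def by (simp only: pc3 pc_sup pcpc_inf)
    also have "pc (D s) = pc (inf (snd f s) (snd g s))" by (simp only: D' pc3)
    also have "inf (inf (pc (fst f r)) (pc (fst g r))) (pc (inf (snd f s) (snd g s)))
        \<le> inf (inf (snd f s) (snd g s)) (pc (inf (snd f s) (snd g s)))"
      using FbM_D(4)[OF f that] FbM_D(4)[OF g that] by (intro inf_mono) simp_all
    also have "\<dots> = bot" by (rule pc_meet)
    finally show "pc (sup (U r) (D s)) = bot" by (simp add: bot_unique)
  qed
  show ?thesis unfolding Je CbarM_def mem_Collect_eq fst_conv snd_conv
    by (intro conjI allI impI; (rule DB | rule c2 | rule c3 | rule c4 | rule c5 | simp only: U_def pcpc_in_Bg); assumption?)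
qed

lemma Mt_Cbar:
  assumes f: "f \<in> FbM" and g: "g \<in> FbM"
  shows "Mt f g \<in> CbarM"
proof -
  define U where "U r = inf (pc (pc (fst f r))) (pc (pc (fst g r)))" for r
  define D where "D s = pc (pc (sup (snd f s) (snd g s)))" for s
  have Me: "Mt f g = (U, D)" unfolding Mt_def U_def D_def by simp
  have UB: "U r \<in> Bg" for r unfolding U_def by (intro inf_Bg pcpc_in_Bg)
  have U': "U r = pc (pc (inf (fst f r) (fst g r)))" for r unfolding U_def by (simp only: pcpc_inf)
  have c2: "inf (U r) (D s) = bot" if "s \<le> r" for r s
  proof -
    have "U r \<le> inf (pc (snd f s)) (pc (snd g s))" unfolding U_def
      using Fb_pcpcu_le[OF f that] Fb_pcpcu_le[OF g that] by (rule inf_mono)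
    also have "\<dots> = pc (D s)" unfolding D_def by (simp only: pc3 pc_sup pcpc_inf)
    finally have "inf (D s) (U r) = bot" by (simp only: le_pc_iff)
    then show ?thesis by (simp only: inf_commute)
  qed
  have c4: "D s = pc (pc (Sup {D r | r. r < s}))" for s
  proof (rule order.antisym)
    have "sup (snd f s) (snd g s) \<le> Sup {D r | r. r < s}"
    proof (rule sup_least)
      have "Sup {snd f r | r. r < s} \<le> Sup {D r | r. r < s}"
      proof (rule Sup_setc_mono)
        fix t assume "t < s"
        have "snd f t \<le> D t" unfolding D_def using pcpc_ge sup_ge1 order.trans by metis
        then show "\<exists>t'. t' < s \<and> snd f t \<le> D t'" using \<open>t < s\<close> by blast
      qed
      then show "snd f s \<le> Sup {D r | r. r < s}" by (subst FbM_D(3)[OF f])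
      have "Sup {snd g r | r. r < s} \<le> Sup {D r | r. r < s}"
      proof (rule Sup_setc_mono)
        fix t assume "t < s"
        have "snd g t \<le> D t" unfolding D_def using pcpc_ge sup_ge2 order.trans by metis
        then show "\<exists>t'. t' < s \<and> snd g t \<le> D t'" using \<open>t < s\<close> by blast
      qed
      then show "snd g s \<le> Sup {D r | r. r < s}" by (subst FbM_D(3)[OF g])
    qed
    then show "D s \<le> pc (pc (Sup {D r | r. r < s}))" unfolding D_def[of s] by (rule pcpc_mono)
    have "Sup {D r | r. r < s} \<le> D s"
    proof (rule Sup_setc_least)
      fix r assume "r < s"
      then have rs: "r \<le> s" by simp
      have "sup (snd f r) (snd g r) \<le> sup (snd f s) (snd g s)"
        by (rule sup_mono[OF Fb_mono(2)[OF f rs] Fb_mono(2)[OF g rs]])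
      then show "D r \<le> D s" unfolding D_def by (rule pcpc_mono)
    qed
    then have "pc (pc (Sup {D r | r. r < s})) \<le> pc (pc (D s))" by (rule pcpc_mono)
    then show "pc (pc (Sup {D r | r. r < s})) \<le> D s" unfolding D_def by (simp only: pcpc_idem)
  qed
  have c3: "U r = pc (pc (Sup {U s | s. s > r}))" for r
  proof (rule order.antisym)
    have "inf (fst f r) (fst g r) \<le> Sup {U s | s. s > r}"
    proof -
      have "inf (Sup {fst f s | s. s > r}) (Sup {fst g s | s. s > r}) \<le> Sup {U s | s. s > r}"
      proof (rule inf_Sup_Sup_le)
        fix a b assume "a \<in> {fst f s | s. s > r}" "b \<in> {fst g s | s. s > r}"
        then obtain s s' where ss: "a = fst f s" "r < s" "b = fst g s'" "r < s'" by blast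
        define m where "m = min s s'"
        have "inf a b \<le> inf (fst f m) (fst g m)" unfolding ss m_def
          by (rule inf_mono) (simp_all add: Fb_mono(1)[OF f] Fb_mono(1)[OF g])
        also have "\<dots> \<le> U m" unfolding U_def by (rule inf_mono) (simp_all add: pcpc_ge)
        also have "\<dots> \<le> Sup {U s | s. s > r}" by (rule Sup_setc_upper) (simp add: m_def ss)
        finally show "inf a b \<le> Sup {U s | s. s > r}" .
      qed
      then show ?thesis by (subst FbM_D(2)[OF f], subst FbM_D(2)[OF g])
    qed
    then have "pc (pc (inf (fst f r) (fst g r))) \<le> pc (pc (Sup {U s | s. s > r}))" by (rule pcpc_mono)
    then show "U r \<le> pc (pc (Sup {U s | s. s > r}))" by (simp only: U')
    have "Sup {U s | s. s > r} \<le> U r"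
    proof (rule Sup_setc_least)
      fix s assume "r < s"
      then have rs: "r \<le> s" by simp
      show "U s \<le> U r" unfolding U_def
        by (rule inf_mono[OF pcpc_mono[OF Fb_mono(1)[OF f rs]] pcpc_mono[OF Fb_mono(1)[OF g rs]]])
    qed
    then have "pc (pc (Sup {U s | s. s > r})) \<le> pc (pc (U r))" by (rule pcpc_mono)
    then show "pc (pc (Sup {U s | s. s > r})) \<le> U r" by (simp only: Bg_pcpc[OF UB])
  qed
  have c5: "pc (pc (sup (U r) (D s))) = top" if "r < s" for r s
  proof (rule pc_top_of_bot)
    have "pc (sup (U r) (D s)) = inf (pc (U r)) (pc (D s))" by (rule pc_sup)
    also have "pc (D s) = inf (pc (snd f s)) (pc (snd g s))" unfolding D_def by (simp only: pc3 pc_sup pcpc_inf)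
    also have "pc (U r) = pc (inf (fst f r) (fst g r))" by (simp only: U' pc3)
    also have "inf (pc (inf (fst f r) (fst g r))) (inf (pc (snd f s)) (pc (snd g s)))
        \<le> inf (pc (inf (fst f r) (fst g r))) (inf (fst f r) (fst g r))"
      using FbM_D(5)[OF f that] FbM_D(5)[OF g that] by (intro inf_mono) simp_all
    also have "\<dots> = bot" by (simp only: pc_meet inf_commute)
    finally show "pc (sup (U r) (D s)) = bot" by (simp add: bot_unique)
  qed
  show ?thesis unfolding Me CbarM_def mem_Collect_eq fst_conv snd_conv
    by (intro conjI allI impI; (rule UB | rule c2 | rule c3 | rule c4 | rule c5 | simp only: D_def pcpc_in_Bg); assumption?)
qed

lemma Fb_antisym: "x \<in> FbM \<Longrightarrow> y \<in> FbM \<Longrightarrow> hom_le (\<le>) x y \<Longrightarrow> hom_le (\<le>) y x \<Longrightarrow> x = y"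
  by (rule hom_le_antisym)

lemma const_setc1: "{c | s::rat. s > r} = {c}"
  by (auto intro!: exI[of _ "r + 1"])
lemma const_setc2: "{c | r::rat. r < s} = {c}"
  by (auto intro!: exI[of _ "s - 1"])

lemma PM_Fb: "PM \<in> FbM"
  unfolding FbM_def PM_def mem_Collect_eq fst_conv snd_conv const_setc1 const_setc2
  by (simp add: pc_top pc_bot)

lemma MM_Fb: "MM \<in> FbM"
  unfolding FbM_def MM_def mem_Collect_eq fst_conv snd_conv const_setc1 const_setc2
  by (simp add: pc_top pc_bot)

lemma beta_PM: "betaM PM = PM" unfolding betaM_def PM_def by (simp add: pcpc_top pcpc_bot)
lemma beta_MM: "betaM MM = MM" unfolding betaM_def MM_def by (simp add: pcpc_top pcpc_bot)

lemma Jn_lub: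
  assumes f: "f \<in> FbM" and g: "g \<in> FbM"
  shows "is_lub FbM (hom_le (\<le>)) {f, g} (Phi (Jn f g))"
proof -
  have J: "Jn f g \<in> CbarM" by (rule Jn_Cbar[OF f g])
  have jF: "Phi (Jn f g) \<in> FbM" by (rule Phi_Fb[OF J])
  have bj: "betaM (Phi (Jn f g)) = Jn f g" by (rule Phi_beta[OF J])
  have fj: "hom_le (\<le>) f (Phi (Jn f g))"
    unfolding Fb_order[OF f jF] bj unfolding hom_le_def betaM_def Jn_def by (simp add: pcpc_mono)
  have gj: "hom_le (\<le>) g (Phi (Jn f g))"
    unfolding Fb_order[OF g jF] bj unfolding hom_le_def betaM_def Jn_def by (simp add: pcpc_mono)
  have least: "hom_le (\<le>) (Phi (Jn f g)) v" if v: "v \<in> FbM" and fv: "hom_le (\<le>) f v" and gv: "hom_le (\<le>) g v" for v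
  proof -
    have "hom_le (\<le>) (Jn f g) (betaM v)"
      using fv gv unfolding hom_le_def betaM_def Jn_def by (simp add: pcpc_mono)
    then show ?thesis unfolding Fb_order[OF jF v] bj .
  qed
  show ?thesis unfolding is_lub_def using jF fj gj least by blast
qed

lemma Mt_glb:
  assumes f: "f \<in> FbM" and g: "g \<in> FbM"
  shows "is_glb FbM (hom_le (\<le>)) {f, g} (Phi (Mt f g))"
proof -
  have J: "Mt f g \<in> CbarM" by (rule Mt_Cbar[OF f g])
  have jF: "Phi (Mt f g) \<in> FbM" by (rule Phi_Fb[OF J])
  have bj: "betaM (Phi (Mt f g)) = Mt f g" by (rule Phi_beta[OF J])
  have fj: "hom_le (\<le>) (Phi (Mt f g)) f"
    unfolding Fb_order[OF jF f] bj unfolding hom_le_def betaM_def Mt_def by (simp add: pcpc_mono)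
  have gj: "hom_le (\<le>) (Phi (Mt f g)) g"
    unfolding Fb_order[OF jF g] bj unfolding hom_le_def betaM_def Mt_def by (simp add: pcpc_mono)
  have greatest: "hom_le (\<le>) v (Phi (Mt f g))" if v: "v \<in> FbM" and fv: "hom_le (\<le>) v f" and gv: "hom_le (\<le>) v g" for v
  proof -
    have "hom_le (\<le>) (betaM v) (Mt f g)"
      using fv gv unfolding hom_le_def betaM_def Mt_def by (simp add: pcpc_mono)
    then show ?thesis unfolding Fb_order[OF v jF] bj .
  qed
  show ?thesis unfolding is_glb_def using jF fj gj greatest by blast
qed

lemma FLM_D:
  assumes "f \<in> FLM"
  shows "f \<in> FbM"
    and "\<And>g. g \<in> FbM \<Longrightarrow> lub FbM (hom_le (\<le>)) {f, g} = PM \<Longrightarrow> g = PM"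
    and "\<And>g. g \<in> FbM \<Longrightarrow> glb FbM (hom_le (\<le>)) {f, g} = MM \<Longrightarrow> g = MM"
  using assms unfolding FLM_def by blast+

lemma FL_C:
  assumes fl: "f \<in> FLM"
  shows "betaM f \<in> CbM"
proof -
  have f: "f \<in> FbM" by (rule FLM_D(1)[OF fl])
  have cb: "betaM f \<in> CbarM" by (rule Fb_beta[OF f])
  have top1: "pc (pc (Sup (range (fst f)))) = top"
  proof -
    define S where "S = Sup (range (fst f))"
    define a where "a = pc S"
    define g :: "(rat \<Rightarrow> 'b) \<times> (rat \<Rightarrow> 'b)" where "g = ((\<lambda>_. a), (\<lambda>_. pc a))"
    have gF: "g \<in> FbM"
      unfolding FbM_def g_def mem_Collect_eq fst_conv snd_conv const_setc1 const_setc2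
      by (simp add: pc_meet a_def pc3)
    have glb: "is_glb FbM (hom_le (\<le>)) {f, g} MM"
      unfolding is_glb_def
    proof (intro conjI ballI impI)
      show "MM \<in> FbM" by (rule MM_Fb)
      fix x assume "x \<in> {f, g}" then show "hom_le (\<le>) MM x" unfolding hom_le_def MM_def by simp
    next
      fix v assume v: "v \<in> FbM" and lb: "\<forall>x\<in>{f, g}. hom_le (\<le>) v x"
      then have vf: "hom_le (\<le>) v f" and vg: "hom_le (\<le>) v g" by auto
      have vb: "fst v r = bot" for r
      proof -
        have "fst v r \<le> fst f r" using vf unfolding hom_le_def by blast
        also have "\<dots> \<le> S" unfolding S_def by (rule Sup_upper) simp
        finally have 1: "fst v r \<le> S" .
        have 2: "fst v r \<le> a" using vg unfolding hom_le_def g_def by simp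
        have "fst v r \<le> inf S (pc S)" using 1 2 unfolding a_def by simp
        then show ?thesis by (simp add: pc_meet bot_unique)
      qed
      have vt: "snd v s = top" for s
      proof -
        have "pc (fst v (s - 1)) \<le> snd v s" by (rule FbM_D(4)[OF v]) simp
        then show ?thesis by (simp add: vb pc_bot top_unique)
      qed
      show "hom_le (\<le>) v MM" unfolding hom_le_def MM_def by (simp add: vb vt)
    qed
    have "glb FbM (hom_le (\<le>)) {f, g} = MM" by (rule glb_eqI[OF Fb_antisym glb])
    then have "g = MM" by (rule FLM_D(3)[OF fl gF])
    then have "a = bot" unfolding g_def MM_def by (metis fst_conv)
    then show ?thesis unfolding a_def S_def by (simp add: pc_bot)
  qed
  have top2: "pc (pc (Sup (range (snd f)))) = top"
  proof -
    define S where "S = Sup (range (snd f))"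
    define b where "b = pc S"
    define g :: "(rat \<Rightarrow> 'b) \<times> (rat \<Rightarrow> 'b)" where "g = ((\<lambda>_. pc b), (\<lambda>_. b))"
    have gF: "g \<in> FbM"
      unfolding FbM_def g_def mem_Collect_eq fst_conv snd_conv const_setc1 const_setc2
      by (simp add: pc_meet b_def pc3 inf_commute)
    have lub: "is_lub FbM (hom_le (\<le>)) {f, g} PM"
      unfolding is_lub_def
    proof (intro conjI ballI impI)
      show "PM \<in> FbM" by (rule PM_Fb)
      fix x assume "x \<in> {f, g}" then show "hom_le (\<le>) x PM" unfolding hom_le_def PM_def by simp
    next
      fix v assume v: "v \<in> FbM" and ub: "\<forall>x\<in>{f, g}. hom_le (\<le>) x v"
      then have fv: "hom_le (\<le>) f v" and gv: "hom_le (\<le>) g v" by auto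
      have vb: "snd v s = bot" for s
      proof -
        have "snd v s \<le> snd f s" using fv unfolding hom_le_def by blast
        also have "\<dots> \<le> S" unfolding S_def by (rule Sup_upper) simp
        finally have 1: "snd v s \<le> S" .
        have 2: "snd v s \<le> b" using gv unfolding hom_le_def g_def by simp
        have "snd v s \<le> inf S (pc S)" using 1 2 unfolding b_def by simp
        then show ?thesis by (simp add: pc_meet bot_unique)
      qed
      have vt: "fst v r = top" for r
      proof -
        have "pc (snd v (r + 1)) \<le> fst v r" by (rule FbM_D(5)[OF v]) simp
        then show ?thesis by (simp add: vb pc_bot top_unique)
      qed
      show "hom_le (\<le>) PM v" unfolding hom_le_def PM_def by (simp add: vb vt)
    qed
    have "lub FbM (hom_le (\<le>)) {f, g} = PM" by (rule lub_eqI[OF Fb_antisym lub])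
    then have "g = PM" by (rule FLM_D(2)[OF fl gF])
    then have "b = bot" unfolding g_def PM_def by (metis snd_conv)
    then show ?thesis unfolding b_def S_def by (simp add: pc_bot)
  qed
  have "pc (pc (Sup (range (fst f)))) \<le> pc (pc (Sup (range (fst (betaM f)))))"
    unfolding betaM_def fst_conv by (intro pcpc_mono SUP_mono) (auto intro: pcpc_ge)
  then have A: "pc (pc (Sup (range (fst (betaM f))))) = top" using top1 by (simp add: top_unique)
  have "pc (pc (Sup (range (snd f)))) \<le> pc (pc (Sup (range (snd (betaM f)))))"
    unfolding betaM_def snd_conv by (intro pcpc_mono SUP_mono) (auto intro: pcpc_ge)
  then have B: "pc (pc (Sup (range (snd (betaM f))))) = top" using top2 by (simp add: top_unique)
  show ?thesis unfolding CbM_def using cb A B by blast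
qed

lemma C_FL:
  assumes phiC: "\<phi> \<in> CbM"
  shows "Phi \<phi> \<in> FLM"
proof -
  have phi: "\<phi> \<in> CbarM" using phiC unfolding CbM_def by blast
  have topU: "pc (pc (Sup (range (fst \<phi>)))) = top" using phiC unfolding CbM_def by blast
  have topD: "pc (pc (Sup (range (snd \<phi>)))) = top" using phiC unfolding CbM_def by blast
  define f where "f = Phi \<phi>"
  have f: "f \<in> FbM" unfolding f_def by (rule Phi_Fb[OF phi])
  have bf: "betaM f = \<phi>" unfolding f_def by (rule Phi_beta[OF phi])
  have bfu: "pc (pc (fst f r)) = fst \<phi> r" for r using arg_cong[OF bf, of "\<lambda>h. fst h r"] unfolding betaM_def by simp
  have bfd: "pc (pc (snd f s)) = snd \<phi> s" for s using arg_cong[OF bf, of "\<lambda>h. snd h s"] unfolding betaM_def by simp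
  have P1: "g = PM" if g: "g \<in> FbM" and L: "lub FbM (hom_le (\<le>)) {f, g} = PM" for g
  proof -
    have "lub FbM (hom_le (\<le>)) {f, g} = Phi (Jn f g)" by (rule lub_eqI[OF Fb_antisym Jn_lub[OF f g]])
    then have "Phi (Jn f g) = PM" using L by simp
    then have "betaM (Phi (Jn f g)) = betaM PM" by simp
    then have "Jn f g = PM" by (simp only: Phi_beta[OF Jn_Cbar[OF f g]] beta_PM)
    then have H: "inf (snd \<phi> s) (pc (pc (snd g s))) = bot" for s
      using arg_cong[of _ _ "\<lambda>h. snd h s"] unfolding Jn_def PM_def by (simp add: bfd fun_eq_iff)
    have gd: "snd g s = bot" for s
    proof -
      have "inf (pc (pc (snd g s))) (snd \<phi> t) = bot" for t
      proof (cases "t \<le> s")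
        case True
        have "inf (pc (pc (snd g s))) (snd \<phi> t) \<le> inf (pc (pc (snd g s))) (snd \<phi> s)"
          by (rule inf_mono[OF order.refl Cbar_mono(2)[OF phi True]])
        also have "\<dots> = bot" using H[of s] by (simp add: inf_commute)
        finally show ?thesis by (simp add: bot_unique)
      next
        case False
        then have st: "s \<le> t" by simp
        have "inf (pc (pc (snd g s))) (snd \<phi> t) \<le> inf (pc (pc (snd g t))) (snd \<phi> t)"
          by (rule inf_mono[OF pcpc_mono[OF Fb_mono(2)[OF g st]] order.refl])
        also have "\<dots> = bot" using H[of t] by (simp add: inf_commute)
        finally show ?thesis by (simp add: bot_unique)
      qed
      then have "inf (pc (pc (snd g s))) (Sup (range (snd \<phi>))) = bot"
        by (simp add: law SUP_bot_conv image_image)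
      then have "pc (pc (snd g s)) \<le> pc (Sup (range (snd \<phi>)))" by (simp add: le_pc_iff inf_commute)
      also have "\<dots> = pc (pc (pc (Sup (range (snd \<phi>)))))" by (simp only: pc3)
      also have "\<dots> = bot" by (simp only: topD pc_top)
      finally have "pc (pc (snd g s)) = bot" by (simp add: bot_unique)
      then show ?thesis using pcpc_ge[of "snd g s"] by (simp add: bot_unique)
    qed
    have gu: "fst g r = top" for r
    proof -
      have "pc (snd g (r + 1)) \<le> fst g r" by (rule FbM_D(5)[OF g]) simp
      then show ?thesis by (simp add: gd pc_bot top_unique)
    qed
    show ?thesis unfolding PM_def by (rule prod_eqI) (simp_all add: gu gd fun_eq_iff)
  qed
  have P2: "g = MM" if g: "g \<in> FbM" and L: "glb FbM (hom_le (\<le>)) {f, g} = MM" for g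
  proof -
    have "glb FbM (hom_le (\<le>)) {f, g} = Phi (Mt f g)" by (rule glb_eqI[OF Fb_antisym Mt_glb[OF f g]])
    then have "Phi (Mt f g) = MM" using L by simp
    then have "betaM (Phi (Mt f g)) = betaM MM" by simp
    then have "Mt f g = MM" by (simp only: Phi_beta[OF Mt_Cbar[OF f g]] beta_MM)
    then have H: "inf (fst \<phi> r) (pc (pc (fst g r))) = bot" for r
      using arg_cong[of _ _ "\<lambda>h. fst h r"] unfolding Mt_def MM_def by (simp add: bfu fun_eq_iff)
    have gu: "fst g r = bot" for r
    proof -
      have "inf (pc (pc (fst g r))) (fst \<phi> t) = bot" for t
      proof (cases "r \<le> t")
        case True
        have "inf (pc (pc (fst g r))) (fst \<phi> t) \<le> inf (pc (pc (fst g r))) (fst \<phi> r)"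
          by (rule inf_mono[OF order.refl Cbar_mono(1)[OF phi True]])
        also have "\<dots> = bot" using H[of r] by (simp add: inf_commute)
        finally show ?thesis by (simp add: bot_unique)
      next
        case False
        then have tr: "t \<le> r" by simp
        have "inf (pc (pc (fst g r))) (fst \<phi> t) \<le> inf (pc (pc (fst g t))) (fst \<phi> t)"
          by (rule inf_mono[OF pcpc_mono[OF Fb_mono(1)[OF g tr]] order.refl])
        also have "\<dots> = bot" using H[of t] by (simp add: inf_commute)
        finally show ?thesis by (simp add: bot_unique)
      qed
      then have "inf (pc (pc (fst g r))) (Sup (range (fst \<phi>))) = bot"
        by (simp add: law SUP_bot_conv image_image)
      then have "pc (pc (fst g r)) \<le> pc (Sup (range (fst \<phi>)))" by (simp add: le_pc_iff inf_commute)
      also have "\<dots> = pc (pc (pc (Sup (range (fst \<phi>)))))" by (simp only: pc3)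
      also have "\<dots> = bot" by (simp only: topU pc_top)
      finally have "pc (pc (fst g r)) = bot" by (simp add: bot_unique)
      then show ?thesis using pcpc_ge[of "fst g r"] by (simp add: bot_unique)
    qed
    have gd: "snd g s = top" for s
    proof -
      have "pc (fst g (s - 1)) \<le> snd g s" by (rule FbM_D(4)[OF g]) simp
      then show ?thesis by (simp add: gu pc_bot top_unique)
    qed
    show ?thesis unfolding MM_def by (rule prod_eqI) (simp_all add: gu gd fun_eq_iff)
  qed
  show ?thesis unfolding f_def[symmetric] FLM_def using f P1 P2 by blast
qed

theorem main_abs:
  "bij_betw betaM FLM CbM \<and> (\<forall>f\<in>FLM. \<forall>g\<in>FLM. hom_le (\<le>) f g \<longleftrightarrow> hom_le (\<le>) (betaM f) (betaM g))"
proof (intro conjI ballI)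
  show "bij_betw betaM FLM CbM" unfolding bij_betw_def
  proof
    show "inj_on betaM FLM"
      by (rule inj_onI) (rule Fb_inj, auto dest: FLM_D(1))
    show "betaM ` FLM = CbM"
    proof
      show "betaM ` FLM \<subseteq> CbM" using FL_C by blast
      show "CbM \<subseteq> betaM ` FLM"
      proof
        fix \<phi> assume p: "\<phi> \<in> CbM"
        then have "\<phi> \<in> CbarM" unfolding CbM_def by blast
        then have "\<phi> = betaM (Phi \<phi>)" by (simp add: Phi_beta)
        then show "\<phi> \<in> betaM ` FLM" using C_FL[OF p] by blast
      qed
    qed
  qed
  fix f g assume "f \<in> FLM" "g \<in> FLM"
  then show "hom_le (\<le>) f g \<longleftrightarrow> hom_le (\<le>) (betaM f) (betaM g)"
    by (intro Fb_order FLM_D(1))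
qed

end


section \<open>Frame law for sublocales\<close>

lemma frame_law: "is_frame TYPE('a::complete_lattice) \<Longrightarrow> inf (a::'a) (Sup B) = Sup (inf a ` B)"
  unfolding is_frame_def by blast

lemma sublocale_InfD: "is_sublocale S \<Longrightarrow> T \<subseteq> S \<Longrightarrow> Inf T \<in> S"
  by (simp add: is_sublocale_def)

lemma sublocale_impD: "is_sublocale S \<Longrightarrow> s \<in> S \<Longrightarrow> frame_imp x s \<in> S"
  by (simp add: is_sublocale_def)

lemma imp_le:
  assumes fr: "is_frame TYPE('a::complete_lattice)"
  shows "(y \<le> frame_imp x s) = (inf y x \<le> (s::'a))"
proof
  assume "y \<le> frame_imp x s"
  then have "inf y x \<le> inf x (frame_imp x s)" by (simp add: inf.coboundedI2 inf_commute le_infI1)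
  also have "inf x (frame_imp x s) = Sup (inf x ` {y. inf y x \<le> s})"
    unfolding frame_imp_def by (rule frame_law[OF fr])
  also have "\<dots> \<le> s" by (rule SUP_least) (simp add: inf_commute)
  finally show "inf y x \<le> s" .
next
  assume "inf y x \<le> s" then show "y \<le> frame_imp x s" unfolding frame_imp_def by (rule Sup_upper[OF CollectI])
qed

lemma imp_inf:
  assumes fr: "is_frame TYPE('a::complete_lattice)"
  shows "frame_imp z (inf a b) = inf (frame_imp z a) (frame_imp z (b::'a))"
proof -
  have eq: "w \<le> frame_imp z (inf a b) \<longleftrightarrow> w \<le> inf (frame_imp z a) (frame_imp z b)" for w
    by (simp add: imp_le[OF fr])
  show ?thesis
    by (rule order.antisym) (use eq[of "frame_imp z (inf a b)"] eq[of "inf (frame_imp z a) (frame_imp z b)"] in simp_all)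
qed

lemma sublocale_meets:
  assumes fr: "is_frame TYPE('a::complete_lattice)"
    and S: "is_sublocale (S::'a set)" and T: "is_sublocale T"
  shows "is_sublocale {inf a b | a b. a \<in> S \<and> b \<in> T}"
proof -
  let ?P = "{inf a b | a b. a \<in> S \<and> b \<in> T}"
  have memI: "inf a b \<in> ?P" if "a \<in> S" "b \<in> T" for a b
    unfolding mem_Collect_eq by (rule exI[of _ a], rule exI[of _ b]) (simp add: that)
  have memE: "\<exists>a b. a \<in> S \<and> b \<in> T \<and> w = inf a b" if "w \<in> ?P" for w
    using that unfolding mem_Collect_eq by (elim exE conjE) (intro exI conjI; assumption)
  have I: "Inf W \<in> ?P" if W: "W \<subseteq> ?P" for W
  proof -
    have "\<forall>w\<in>W. \<exists>p. fst p \<in> S \<and> snd p \<in> T \<and> w = inf (fst p) (snd p)"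
    proof
      fix w assume "w \<in> W"
      have "w \<in> ?P" using W \<open>w \<in> W\<close> by (rule subsetD)
      then obtain a b where "a \<in> S" "b \<in> T" "w = inf a b" using memE by meson
      then show "\<exists>p. fst p \<in> S \<and> snd p \<in> T \<and> w = inf (fst p) (snd p)" by (intro exI[of _ "(a, b)"]) simp
    qed
    from bchoice[OF this] obtain p where p0: "\<forall>w\<in>W. fst (p w) \<in> S \<and> snd (p w) \<in> T \<and> w = inf (fst (p w)) (snd (p w))"
      by (elim exE)
    have pS: "fst (p w) \<in> S" and pT: "snd (p w) \<in> T" and pe: "w = inf (fst (p w)) (snd (p w))" if "w \<in> W" for w
      using p0 that by simp_all
    define A where "A = Inf ((\<lambda>w. fst (p w)) ` W)"
    define B where "B = Inf ((\<lambda>w. snd (p w)) ` W)"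
    have AS: "A \<in> S" unfolding A_def by (rule sublocale_InfD[OF S]) (auto intro: pS)
    have BT: "B \<in> T" unfolding B_def by (rule sublocale_InfD[OF T]) (auto intro: pT)
    have "Inf W = inf A B"
    proof (rule order.antisym)
      have "Inf W \<le> A" unfolding A_def
      proof (rule INF_greatest)
        fix w assume w: "w \<in> W"
        then have "Inf W \<le> w" by (rule Inf_lower)
        also have "w \<le> fst (p w)" by (rule ord_eq_le_trans[OF pe[OF w] inf_le1])
        finally show "Inf W \<le> fst (p w)" .
      qed
      moreover have "Inf W \<le> B" unfolding B_def
      proof (rule INF_greatest)
        fix w assume w: "w \<in> W"
        then have "Inf W \<le> w" by (rule Inf_lower)
        also have "w \<le> snd (p w)" by (rule ord_eq_le_trans[OF pe[OF w] inf_le2])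
        finally show "Inf W \<le> snd (p w)" .
      qed
      ultimately show "Inf W \<le> inf A B" by (rule le_infI)
      show "inf A B \<le> Inf W"
      proof (rule Inf_greatest)
        fix w assume w: "w \<in> W"
        have "A \<le> fst (p w)" unfolding A_def using w by (rule INF_lower)
        moreover have "B \<le> snd (p w)" unfolding B_def using w by (rule INF_lower)
        ultimately have "inf A B \<le> inf (fst (p w)) (snd (p w))" by (rule inf_mono)
        then show "inf A B \<le> w" by (rule ord_le_eq_trans[OF _ pe[OF w, symmetric]])
      qed
    qed
    then show ?thesis using memI[OF AS BT] by (rule ssubst)
  qed
  have J: "frame_imp x w \<in> ?P" if w: "w \<in> ?P" for x w
  proof -
    from memE[OF w] obtain a b where ab: "a \<in> S" "b \<in> T" "w = inf a b" by (elim exE conjE)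
    have "frame_imp x w = inf (frame_imp x a) (frame_imp x b)" unfolding ab(3) by (rule imp_inf[OF fr])
    moreover have "inf (frame_imp x a) (frame_imp x b) \<in> ?P"
      by (rule memI[OF sublocale_impD[OF S ab(1)] sublocale_impD[OF T ab(2)]])
    ultimately show ?thesis by simp
  qed
  show ?thesis unfolding is_sublocale_def using I J by (intro conjI allI impI ballI)
qed

lemma R_sublocale: "is_sublocale (R x)"
  using R[of x] unfolding coS_def by simp

lemma top_in_R: "top \<in> R x"
  using sublocale_InfD[OF R_sublocale[of x], of "{}"] by simp

lemma R_inf_char:
  assumes fr: "is_frame TYPE('a::complete_lattice)"
  shows "R (inf x (y::'a csl)) = {inf a b | a b. a \<in> R x \<and> b \<in> R y}"
proof
  let ?P = "{inf a b | a b. a \<in> R x \<and> b \<in> R y}"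
  have Pc: "?P \<in> coS" unfolding coS_def using sublocale_meets[OF fr R_sublocale R_sublocale] by simp
  have "R x \<subseteq> ?P"
  proof
    fix a assume "a \<in> R x"
    have "a = inf a top" by simp
    then show "a \<in> ?P" using top_in_R[of y] \<open>a \<in> R x\<close> by blast
  qed
  moreover have "R y \<subseteq> ?P"
  proof
    fix b assume "b \<in> R y"
    have "b = inf top b" by simp
    then show "b \<in> ?P" using top_in_R[of x] \<open>b \<in> R y\<close> by blast
  qed
  ultimately have "?P \<in> {S \<in> coS. R x \<union> R y \<subseteq> S}" using Pc by simp
  then show "R (inf x y) \<subseteq> ?P" unfolding R_inf_csl by (rule Inter_lower)
  show "?P \<subseteq> R (inf x y)" unfolding R_inf_csl
  proof
    fix w assume "w \<in> ?P"
    then obtain a b where ab: "a \<in> R x" "b \<in> R y" "w = inf a b" by blast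
    show "w \<in> \<Inter> {S \<in> coS. R x \<union> R y \<subseteq> S}"
    proof
      fix S assume "S \<in> {S \<in> coS. R x \<union> R y \<subseteq> S}"
      then have S: "is_sublocale S" "R x \<union> R y \<subseteq> S" unfolding coS_def by auto
      then have "Inf {a, b} \<in> S" using ab by (intro sublocale_InfD[OF S(1)]) auto
      then show "w \<in> S" using ab(3) by simp
    qed
  qed
qed

lemma csl_law:
  assumes fr: "is_frame TYPE('a::complete_lattice)"
  shows "inf (x::'a csl) (Sup Y) = Sup (inf x ` Y)"
proof (rule order.antisym)
  show "Sup (inf x ` Y) \<le> inf x (Sup Y)"
    by (rule SUP_least) (simp add: inf.coboundedI2 Sup_upper le_infI2)
  show "inf x (Sup Y) \<le> Sup (inf x ` Y)"
    unfolding less_eq_csl_def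
  proof
    fix z assume z: "z \<in> R (Sup (inf x ` Y))"
    then have zY: "\<And>y. y \<in> Y \<Longrightarrow> z \<in> R (inf x y)" unfolding R_Sup_csl by blast
    define s where "s = Inf {a \<in> R x. z \<le> a}"
    have sR: "s \<in> R x" unfolding s_def by (rule sublocale_InfD[OF R_sublocale]) auto
    have zs: "z \<le> s" unfolding s_def by (rule Inf_greatest) simp
    define t where "t = frame_imp s z"
    have tY: "t \<in> R y" if y: "y \<in> Y" for y
    proof -
      obtain a b where ab: "a \<in> R x" "b \<in> R y" "z = inf a b"
        using zY[OF y] unfolding R_inf_char[OF fr] by blast
      have sa: "s \<le> a" unfolding s_def using ab by (intro Inf_lower) simp
      have eq: "w \<le> frame_imp s z \<longleftrightarrow> w \<le> frame_imp s b" for w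
      proof -
        have "inf w s \<le> z \<longleftrightarrow> inf w s \<le> b"
        proof
          assume "inf w s \<le> z" then show "inf w s \<le> b" using ab(3) by (simp add: le_infI2 le_inf_iff)
        next
          assume "inf w s \<le> b"
          moreover have "inf w s \<le> a" using sa by (simp add: le_infI2)
          ultimately show "inf w s \<le> z" using ab(3) by simp
        qed
        then show ?thesis by (simp add: imp_le[OF fr])
      qed
      have "frame_imp s z = frame_imp s b"
        by (rule order.antisym) (use eq[of "frame_imp s z"] eq[of "frame_imp s b"] in simp_all)
      moreover have "frame_imp s b \<in> R y" by (rule sublocale_impD[OF R_sublocale ab(2)])
      ultimately show ?thesis unfolding t_def by simp
    qed
    have tS: "t \<in> R (Sup Y)" unfolding R_Sup_csl using tY by blast
    have "z = inf s t"
    proof (rule order.antisym)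
      have "z \<le> t" unfolding t_def by (simp add: imp_le[OF fr])
      then show "z \<le> inf s t" using zs by simp
      have "t \<le> t" by simp
      then have "inf t s \<le> z" unfolding t_def by (simp only: imp_le[OF fr])
      then show "inf s t \<le> z" by (simp add: inf_commute)
    qed
    then show "z \<in> R (inf x (Sup Y))" unfolding R_inf_char[OF fr] using sR tS by blast
  qed
qed


lemma lub_embed:
  assumes ord: "\<And>x y. x \<in> P \<Longrightarrow> y \<in> P \<Longrightarrow> le' (H x) (H y) = le x y"
    and anti: "\<And>x y. x \<in> H ` P \<Longrightarrow> y \<in> H ` P \<Longrightarrow> le' x y \<Longrightarrow> le' y x \<Longrightarrow> x = y"
    and X: "X \<subseteq> P" and L: "is_lub P le X u"
  shows "lub (H ` P) le' (H ` X) = H u"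
proof (rule lub_eqI[OF anti])
  have uP: "u \<in> P" and ub: "\<And>x. x \<in> X \<Longrightarrow> le x u"
    and least: "\<And>v. v \<in> P \<Longrightarrow> (\<forall>x\<in>X. le x v) \<Longrightarrow> le u v"
    using L unfolding is_lub_def by blast+
  show "is_lub (H ` P) le' (H ` X) (H u)"
    unfolding is_lub_def
  proof (intro conjI ballI impI)
    show "H u \<in> H ` P" using uP by (rule imageI)
    fix x' assume "x' \<in> H ` X"
    then obtain x where x: "x \<in> X" "x' = H x" by (elim imageE)
    show "le' x' (H u)" unfolding x(2) using ord[of x u] X x(1) uP ub[OF x(1)] by auto
  next
    fix v' assume v': "v' \<in> H ` P" and ub': "\<forall>x'\<in>H ` X. le' x' v'"
    then obtain v where v: "v \<in> P" "v' = H v" by (elim imageE)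
    have "\<forall>x\<in>X. le x v"
    proof
      fix x assume x: "x \<in> X"
      then have "le' (H x) (H v)" using ub' v(2) by auto
      then show "le x v" using ord[of x v] X x v(1) by auto
    qed
    then have "le u v" by (rule least[OF v(1)])
    then show "le' (H u) v'" unfolding v(2) using ord[of u v] uP v(1) by auto
  qed
qed

lemma glb_embed:
  assumes ord: "\<And>x y. x \<in> P \<Longrightarrow> y \<in> P \<Longrightarrow> le' (H x) (H y) = le x y"
    and anti: "\<And>x y. x \<in> H ` P \<Longrightarrow> y \<in> H ` P \<Longrightarrow> le' x y \<Longrightarrow> le' y x \<Longrightarrow> x = y"
    and X: "X \<subseteq> P" and L: "is_glb P le X u"
  shows "glb (H ` P) le' (H ` X) = H u"
proof (rule glb_eqI[OF anti])
  have uP: "u \<in> P" and lb: "\<And>x. x \<in> X \<Longrightarrow> le u x"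
    and greatest: "\<And>v. v \<in> P \<Longrightarrow> (\<forall>x\<in>X. le v x) \<Longrightarrow> le v u"
    using L unfolding is_glb_def by blast+
  show "is_glb (H ` P) le' (H ` X) (H u)"
    unfolding is_glb_def
  proof (intro conjI ballI impI)
    show "H u \<in> H ` P" using uP by (rule imageI)
    fix x' assume "x' \<in> H ` X"
    then obtain x where x: "x \<in> X" "x' = H x" by (elim imageE)
    show "le' (H u) x'" unfolding x(2) using ord[of u x] X x(1) uP lb[OF x(1)] by auto
  next
    fix v' assume v': "v' \<in> H ` P" and lb': "\<forall>x'\<in>H ` X. le' v' x'"
    then obtain v where v: "v \<in> P" "v' = H v" by (elim imageE)
    have "\<forall>x\<in>X. le v x"
    proof
      fix x assume x: "x \<in> X"
      then have "le' (H v) (H x)" using lb' v(2) by auto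
      then show "le v x" using ord[of v x] X x v(1) by auto
    qed
    then have "le v u" by (rule greatest[OF v(1)])
    then show "le' v' (H u)" unfolding v(2) using ord[of v u] uP v(1) by auto
  qed
qed

lemma coS_le_antisym: "coS_le x y \<Longrightarrow> coS_le y x \<Longrightarrow> x = y"
  unfolding coS_le_def by (rule subset_antisym)

lemma hom_le_coS_antisym: "hom_le coS_le f g \<Longrightarrow> hom_le coS_le g f \<Longrightarrow> f = g"
  unfolding hom_le_def coS_le_def by (intro prod_eqI ext subset_antisym) auto

lemma le_R: "coS_le (R x) (R y) = (x \<le> y)"
  by (simp add: coS_le_def less_eq_csl_def)

lemma range_R: "range R = coS"
  by (rule type_definition.Rep_range[OF type_definition_csl])

lemma lubR: "lub coS coS_le (R ` X) = R (Sup X)"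
proof -
  have "lub (R ` UNIV) coS_le (R ` X) = R (Sup X)"
    by (rule lub_embed[where le = "(\<le>)"]) (auto simp: le_R is_lub_def intro: coS_le_antisym Sup_upper Sup_least)
  then show ?thesis by (simp add: range_R)
qed

lemma glbR: "glb coS coS_le (R ` X) = R (Inf X)"
proof -
  have "glb (R ` UNIV) coS_le (R ` X) = R (Inf X)"
    by (rule glb_embed[where le = "(\<le>)"]) (auto simp: le_R is_glb_def intro: coS_le_antisym Inf_lower Inf_greatest)
  then show ?thesis by (simp add: range_R)
qed

lemma meetR: "meet coS coS_le (R x) (R y) = R (inf x y)"
  using glbR[of "{x, y}"] by (simp add: meet_def)

lemma botR: "bot_el coS coS_le = R bot"
  using lubR[of "{}"] by (simp add: bot_el_def)

lemma topR: "top_el coS coS_le = R top"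
  using glbR[of "{}"] by (simp add: top_el_def)

lemma setc_R: "{R (F s) | s. P s} = R ` {F s | s. P s}" by auto

definition Rp :: "(rat \<Rightarrow> 'a::complete_lattice csl) \<times> (rat \<Rightarrow> 'a csl) \<Rightarrow> (rat \<Rightarrow> 'a set) \<times> (rat \<Rightarrow> 'a set)" where
  "Rp f = (\<lambda>r. R (fst f r), \<lambda>s. R (snd f s))"

lemma Rp_inj: "Rp f = Rp g \<Longrightarrow> f = g"
  unfolding Rp_def by (intro prod_eqI ext) (auto simp: fun_eq_iff R_inject)

lemma hom_le_Rp: "hom_le coS_le (Rp f) (Rp g) = hom_le (\<le>) f g"
  unfolding hom_le_def Rp_def by (simp add: le_R)

lemma Rp_surj: "(\<forall>r. fst f r \<in> coS) \<Longrightarrow> (\<forall>s. snd f s \<in> coS) \<Longrightarrow> f = Rp (\<lambda>r. Ab (fst f r), \<lambda>s. Ab (snd f s))"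
  unfolding Rp_def by (intro prod_eqI ext) (simp_all add: Ab_inverse)

locale frm_csl =
  fixes tp :: "'a::complete_lattice itself"
  assumes fr: "is_frame TYPE('a)"

sublocale frm_csl \<subseteq> F: frm "TYPE('a csl)"
  by unfold_locales (rule csl_law[OF fr])

context frm_csl
begin

lemma pcR: "pcompl coS coS_le (R x) = R (F.pc x)"
proof -
  have "{y \<in> coS. meet coS coS_le (R x) y = bot_el coS coS_le} = R ` {y. inf x y = bot}"
  proof
    show "{y \<in> coS. meet coS coS_le (R x) y = bot_el coS coS_le} \<subseteq> R ` {y. inf x y = bot}"
    proof
      fix y :: "'a set" assume y: "y \<in> {y \<in> coS. meet coS coS_le (R x) y = bot_el coS coS_le}"
      then have yc: "y \<in> coS" and m: "meet coS coS_le (R x) y = bot_el coS coS_le" by auto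
      have ye: "y = R (Ab y)" using yc by (simp add: Ab_inverse)
      have "R (inf x (Ab y)) = R bot" using m ye meetR botR by metis
      then have "inf x (Ab y) = bot" by (simp add: R_inject)
      then show "y \<in> R ` {y. inf x y = bot}" using ye by blast
    qed
    show "R ` {y. inf x y = bot} \<subseteq> {y \<in> coS. meet coS coS_le (R x) y = bot_el coS coS_le}"
      by (auto simp: meetR botR R)
  qed
  then show ?thesis by (simp add: lubR F.pc_def pcompl_def)
qed

lemma betaR: "beta (R x) = R (F.pc (F.pc x))"
  unfolding beta_def by (simp add: pcR)

lemma BgR: "booleanization coS coS_le = R ` F.Bg"
proof
  show "booleanization coS coS_le \<subseteq> R ` F.Bg"
  proof
    fix y :: "'a set" assume "y \<in> booleanization coS coS_le"
    then have yc: "y \<in> coS" and e: "pcompl coS coS_le (pcompl coS coS_le y) = y"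
      unfolding booleanization_def by auto
    have ye: "y = R (Ab y)" using yc by (simp add: Ab_inverse)
    have "R (F.pc (F.pc (Ab y))) = R (Ab y)" using e ye pcR by metis
    then have "Ab y \<in> F.Bg" by (simp add: R_inject F.Bg_def)
    then show "y \<in> R ` F.Bg" using ye by blast
  qed
  show "R ` F.Bg \<subseteq> booleanization coS coS_le"
    by (auto simp: booleanization_def pcR F.Bg_def R)
qed

lemma BgR_ord: "x \<in> F.Bg \<Longrightarrow> y \<in> F.Bg \<Longrightarrow> coS_le (R x) (R y) = (x \<le> y)"
  by (rule le_R)

lemma BgR_anti: "x \<in> R ` F.Bg \<Longrightarrow> y \<in> R ` F.Bg \<Longrightarrow> coS_le x y \<Longrightarrow> coS_le y x \<Longrightarrow> x = y"
  by (rule coS_le_antisym)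

lemma lubB: "X \<subseteq> F.Bg \<Longrightarrow> lub (R ` F.Bg) coS_le (R ` X) = R (F.pc (F.pc (Sup X)))"
  by (rule lub_embed[where P = F.Bg and le = "(\<le>)"]; (rule le_R | rule coS_le_antisym | rule F.is_lub_Bg | assumption)+)

lemma is_glb_Bg2: "x \<in> F.Bg \<Longrightarrow> y \<in> F.Bg \<Longrightarrow> is_glb F.Bg (\<le>) {x, y} (inf x y)"
  unfolding is_glb_def
proof (intro conjI ballI impI)
  assume "x \<in> F.Bg" "y \<in> F.Bg"
  then show "inf x y \<in> F.Bg" by (rule F.inf_Bg)
  fix z assume "z \<in> {x, y}" then show "inf x y \<le> z" by (elim insertE) auto
next
  fix v assume "\<forall>z\<in>{x, y}. v \<le> z" then show "v \<le> inf x y" by simp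
qed

lemma is_glb_Bg0: "is_glb F.Bg (\<le>) {} top"
  unfolding is_glb_def using F.top_Bg by simp

lemma meetB: "x \<in> F.Bg \<Longrightarrow> y \<in> F.Bg \<Longrightarrow> meet (R ` F.Bg) coS_le (R x) (R y) = R (inf x y)"
proof -
  assume xy: "x \<in> F.Bg" "y \<in> F.Bg"
  have "glb (R ` F.Bg) coS_le (R ` {x, y}) = R (inf x y)"
    by (rule glb_embed[where P = F.Bg and le = "(\<le>)"]; (rule le_R | rule coS_le_antisym | rule is_glb_Bg2[OF xy] | simp add: xy | assumption)+)
  then show ?thesis unfolding meet_def by simp
qed

lemma topB: "top_el (R ` F.Bg) coS_le = R top"
proof -
  have "glb (R ` F.Bg) coS_le (R ` {}) = R top"
    by (rule glb_embed[where P = F.Bg and le = "(\<le>)"]; (rule le_R | rule coS_le_antisym | rule F.is_lub_Bg | rule is_glb_Bg0 | rule is_glb_Bg2 | rule empty_subsetI | assumption)+)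
  then show ?thesis unfolding top_el_def by simp
qed

lemma botB: "bot_el (R ` F.Bg) coS_le = R bot"
proof -
  have "lub (R ` F.Bg) coS_le (R ` {}) = R (F.pc (F.pc (Sup {})))" by (rule lubB) (rule empty_subsetI)
  then show ?thesis unfolding bot_el_def by (simp add: F.pcpc_bot)
qed

lemma joinB: "x \<in> F.Bg \<Longrightarrow> y \<in> F.Bg \<Longrightarrow> join (R ` F.Bg) coS_le (R x) (R y) = R (F.pc (F.pc (sup x y)))"
proof -
  assume xy: "x \<in> F.Bg" "y \<in> F.Bg"
  have "lub (R ` F.Bg) coS_le (R ` {x, y}) = R (F.pc (F.pc (Sup {x, y})))" by (rule lubB) (use xy in auto)
  then show ?thesis unfolding join_def by simp
qed

lemma Fbar_Rp: "(Rp f \<in> Fbar) = (f \<in> F.FbM)"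
  unfolding Fbar_def F.FbM_def LIR_hom_def Rp_def mem_Collect_eq fst_conv snd_conv
  by (simp add: R meetR botR setc_R lubR pcR le_R R_inject)

lemma Fbar_eq: "Fbar = Rp ` F.FbM"
proof
  show "Fbar \<subseteq> Rp ` F.FbM"
  proof
    fix f :: "(rat \<Rightarrow> 'a set) \<times> (rat \<Rightarrow> 'a set)" assume f: "f \<in> Fbar"
    have L: "LIR_hom coS coS_le f" using f unfolding Fbar_def mem_Collect_eq by (rule conjunct1)
    have c1: "\<forall>r. fst f r \<in> coS" using L unfolding LIR_hom_def by (rule conjunct1)
    have c2: "\<forall>s. snd f s \<in> coS" using L unfolding LIR_hom_def by (elim conjE)
    define g0 where "g0 = ((\<lambda>r. Ab (fst f r)), (\<lambda>s. Ab (snd f s)))"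
    have fe: "f = Rp g0" unfolding g0_def using c1 c2 by (rule Rp_surj)
    have "Rp g0 \<in> Fbar" using f by (subst (asm) fe)
    then have "g0 \<in> F.FbM" by (rule Fbar_Rp[THEN iffD1])
    then show "f \<in> Rp ` F.FbM" unfolding fe by (rule imageI)
  qed
  show "Rp ` F.FbM \<subseteq> Fbar"
  proof
    fix f :: "(rat \<Rightarrow> 'a set) \<times> (rat \<Rightarrow> 'a set)" assume "f \<in> Rp ` F.FbM"
    then obtain g where "g \<in> F.FbM" "f = Rp g" by (elim imageE)
    then show "f \<in> Fbar" using Fbar_Rp by simp
  qed
qed

lemma PInf_eq: "PInf = Rp F.PM"
  unfolding PInf_def F.PM_def Rp_def by (simp add: topR botR)

lemma MInf_eq: "MInf = Rp F.MM"
  unfolding MInf_def F.MM_def Rp_def by (simp add: topR botR)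

lemma Fb_ord_Rp: "x \<in> F.FbM \<Longrightarrow> y \<in> F.FbM \<Longrightarrow> hom_le coS_le (Rp x) (Rp y) = hom_le (\<le>) x y"
  by (rule hom_le_Rp)

lemma Fb_anti_Rp: "x \<in> Rp ` F.FbM \<Longrightarrow> y \<in> Rp ` F.FbM \<Longrightarrow> hom_le coS_le x y \<Longrightarrow> hom_le coS_le y x \<Longrightarrow> x = y"
  by (rule hom_le_coS_antisym)

lemma lub_Fbar:
  assumes f: "f \<in> F.FbM" and g: "g \<in> F.FbM"
  shows "lub Fbar (hom_le coS_le) {Rp f, Rp g} = Rp (lub F.FbM (hom_le (\<le>)) {f, g})"
proof -
  have "lub (Rp ` F.FbM) (hom_le coS_le) (Rp ` {f, g}) = Rp (F.Phi (F.Jn f g))"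
    by (rule lub_embed[where P = F.FbM and le = "hom_le (\<le>)"]; (rule hom_le_Rp | rule hom_le_coS_antisym | rule F.Jn_lub[OF f g] | simp add: f g | assumption)+)
  moreover have "lub F.FbM (hom_le (\<le>)) {f, g} = F.Phi (F.Jn f g)"
    by (rule lub_eqI[OF F.Fb_antisym F.Jn_lub[OF f g]])
  ultimately show ?thesis by (simp add: Fbar_eq)
qed

lemma glb_Fbar:
  assumes f: "f \<in> F.FbM" and g: "g \<in> F.FbM"
  shows "glb Fbar (hom_le coS_le) {Rp f, Rp g} = Rp (glb F.FbM (hom_le (\<le>)) {f, g})"
proof -
  have "glb (Rp ` F.FbM) (hom_le coS_le) (Rp ` {f, g}) = Rp (F.Phi (F.Mt f g))"
    by (rule glb_embed[where P = F.FbM and le = "hom_le (\<le>)"]; (rule hom_le_Rp | rule hom_le_coS_antisym | rule F.Mt_glb[OF f g] | simp add: f g | assumption)+)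
  moreover have "glb F.FbM (hom_le (\<le>)) {f, g} = F.Phi (F.Mt f g)"
    by (rule glb_eqI[OF F.Fb_antisym F.Mt_glb[OF f g]])
  ultimately show ?thesis by (simp add: Fbar_eq)
qed

lemma FL_Rp: "(Rp f \<in> FL) = (f \<in> F.FLM)"
proof
  assume H: "Rp f \<in> FL"
  then have fF: "f \<in> F.FbM" unfolding FL_def using Fbar_Rp by blast
  have H2: "\<forall>g' \<in> Fbar. (lub Fbar (hom_le coS_le) {Rp f, g'} = PInf \<longrightarrow> g' = PInf) \<and>
      (glb Fbar (hom_le coS_le) {Rp f, g'} = MInf \<longrightarrow> g' = MInf)" using H unfolding FL_def by blast
  show "f \<in> F.FLM" unfolding F.FLM_def
  proof (intro CollectI conjI ballI impI fF)
    fix g assume g: "g \<in> F.FbM" and L: "lub F.FbM (hom_le (\<le>)) {f, g} = F.PM"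
    have "lub Fbar (hom_le coS_le) {Rp f, Rp g} = PInf" by (simp add: lub_Fbar[OF fF g] L PInf_eq)
    then have "Rp g = PInf" using H2 g Fbar_Rp by blast
    then show "g = F.PM" unfolding PInf_eq by (rule Rp_inj)
  next
    fix g assume g: "g \<in> F.FbM" and L: "glb F.FbM (hom_le (\<le>)) {f, g} = F.MM"
    have "glb Fbar (hom_le coS_le) {Rp f, Rp g} = MInf" by (simp add: glb_Fbar[OF fF g] L MInf_eq)
    then have "Rp g = MInf" using H2 g Fbar_Rp by blast
    then show "g = F.MM" unfolding MInf_eq by (rule Rp_inj)
  qed
next
  assume H: "f \<in> F.FLM"
  then have fF: "f \<in> F.FbM" by (rule F.FLM_D(1))
  show "Rp f \<in> FL" unfolding FL_def
  proof (intro CollectI conjI ballI impI)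
    show "Rp f \<in> Fbar" using fF Fbar_Rp by blast
    fix g' :: "(rat \<Rightarrow> 'a set) \<times> (rat \<Rightarrow> 'a set)" assume g': "g' \<in> Fbar"
    then obtain g where g: "g \<in> F.FbM" "g' = Rp g" unfolding Fbar_eq by blast
    {
      assume "lub Fbar (hom_le coS_le) {Rp f, g'} = PInf"
      then have "Rp (lub F.FbM (hom_le (\<le>)) {f, g}) = Rp F.PM" by (simp add: g(2) lub_Fbar[OF fF g(1)] PInf_eq)
      then have "lub F.FbM (hom_le (\<le>)) {f, g} = F.PM" by (rule Rp_inj)
      then have "g = F.PM" by (rule F.FLM_D(2)[OF H g(1)])
      then show "g' = PInf" by (simp add: g(2) PInf_eq)
    }
    {
      assume "glb Fbar (hom_le coS_le) {Rp f, g'} = MInf"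
      then have "Rp (glb F.FbM (hom_le (\<le>)) {f, g}) = Rp F.MM" by (simp add: g(2) glb_Fbar[OF fF g(1)] MInf_eq)
      then have "glb F.FbM (hom_le (\<le>)) {f, g} = F.MM" by (rule Rp_inj)
      then have "g = F.MM" by (rule F.FLM_D(3)[OF H g(1)])
      then show "g' = MInf" by (simp add: g(2) MInf_eq)
    }
  qed
qed

lemma FL_eq: "FL = Rp ` F.FLM"
proof
  show "FL \<subseteq> Rp ` F.FLM"
  proof
    fix f :: "(rat \<Rightarrow> 'a set) \<times> (rat \<Rightarrow> 'a set)" assume f: "f \<in> FL"
    then have "f \<in> Fbar" unfolding FL_def by blast
    then obtain f' where "f' \<in> F.FbM" "f = Rp f'" unfolding Fbar_eq by blast
    then show "f \<in> Rp ` F.FLM" using f FL_Rp by blast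
  qed
  show "Rp ` F.FLM \<subseteq> FL" using FL_Rp by blast
qed

lemma beta_Rp: "beta_comp (Rp f) = Rp (F.betaM f)"
  unfolding beta_comp_def Rp_def F.betaM_def by (simp add: betaR)

end


context frm_csl
begin

lemma R_in_image: "(R x \<in> R ` A) = (x \<in> A)"
  by (auto simp: R_inject)

lemma C_Rp:
  assumes v1: "\<And>r. fst \<phi> r \<in> F.Bg" and v2: "\<And>s. snd \<phi> s \<in> F.Bg"
  shows "(Rp \<phi> \<in> C_frame (booleanization coS coS_le) coS_le) = (\<phi> \<in> F.CbM)"
proof -
  have m: "meet (R ` F.Bg) coS_le (R (fst \<phi> r)) (R (snd \<phi> s)) = R (inf (fst \<phi> r) (snd \<phi> s))" for r s
    by (rule meetB[OF v1 v2])
  have j: "join (R ` F.Bg) coS_le (R (fst \<phi> r)) (R (snd \<phi> s)) = R (F.pc (F.pc (sup (fst \<phi> r) (snd \<phi> s))))" for r s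
    by (rule joinB[OF v1 v2])
  have lu: "lub (R ` F.Bg) coS_le {R (fst \<phi> s) | s. s > r} = R (F.pc (F.pc (Sup {fst \<phi> s | s. s > r})))" for r
  proof -
    have "{fst \<phi> s | s. s > r} \<subseteq> F.Bg" using v1 by blast
    then show ?thesis unfolding setc_R by (rule lubB)
  qed
  have ld: "lub (R ` F.Bg) coS_le {R (snd \<phi> r) | r. r < s} = R (F.pc (F.pc (Sup {snd \<phi> r | r. r < s})))" for s
  proof -
    have "{snd \<phi> r | r. r < s} \<subseteq> F.Bg" using v2 by blast
    then show ?thesis unfolding setc_R by (rule lubB)
  qed
  have ru: "lub (R ` F.Bg) coS_le (range (\<lambda>r. R (fst \<phi> r))) = R (F.pc (F.pc (Sup (range (fst \<phi>)))))"
  proof -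
    have e: "range (\<lambda>r. R (fst \<phi> r)) = R ` range (fst \<phi>)" by auto
    have "range (fst \<phi>) \<subseteq> F.Bg" using v1 by blast
    then show ?thesis unfolding e by (rule lubB)
  qed
  have rd: "lub (R ` F.Bg) coS_le (range (\<lambda>r. R (snd \<phi> r))) = R (F.pc (F.pc (Sup (range (snd \<phi>)))))"
  proof -
    have e: "range (\<lambda>r. R (snd \<phi> r)) = R ` range (snd \<phi>)" by auto
    have "range (snd \<phi>) \<subseteq> F.Bg" using v2 by blast
    then show ?thesis unfolding e by (rule lubB)
  qed
  show ?thesis
    unfolding C_frame_def BgR LIR_hom_def Rp_def F.CbM_def F.CbarM_def mem_Collect_eq fst_conv snd_conv
    by (simp only: m j lu ld ru rd botB topB R_inject R_in_image conj_assoc)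
qed

lemma C_eq: "C_frame (booleanization coS coS_le) coS_le = Rp ` F.CbM"
proof
  show "C_frame (booleanization coS coS_le) coS_le \<subseteq> Rp ` F.CbM"
  proof
    fix \<phi> :: "(rat \<Rightarrow> 'a set) \<times> (rat \<Rightarrow> 'a set)"
    assume p: "\<phi> \<in> C_frame (booleanization coS coS_le) coS_le"
    have L: "LIR_hom (R ` F.Bg) coS_le \<phi>" using p unfolding C_frame_def BgR mem_Collect_eq by (rule conjunct1)
    have c1: "\<forall>r. fst \<phi> r \<in> R ` F.Bg" using L unfolding LIR_hom_def by (rule conjunct1)
    have c2: "\<forall>s. snd \<phi> s \<in> R ` F.Bg" using L unfolding LIR_hom_def by (elim conjE)
    have a1: "Ab (fst \<phi> r) \<in> F.Bg" for r
    proof -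
      from c1 obtain x where "x \<in> F.Bg" "fst \<phi> r = R x" by blast
      then show ?thesis by (simp add: R_inverse)
    qed
    have a2: "Ab (snd \<phi> s) \<in> F.Bg" for s
    proof -
      from c2 obtain x where "x \<in> F.Bg" "snd \<phi> s = R x" by blast
      then show ?thesis by (simp add: R_inverse)
    qed
    have d1: "\<forall>r. fst \<phi> r \<in> coS"
    proof
      fix r from c1 obtain x where "fst \<phi> r = R x" by blast
      then show "fst \<phi> r \<in> coS" by (simp add: R)
    qed
    have d2: "\<forall>s. snd \<phi> s \<in> coS"
    proof
      fix s from c2 obtain x where "snd \<phi> s = R x" by blast
      then show "snd \<phi> s \<in> coS" by (simp add: R)
    qed
    define g0 where "g0 = ((\<lambda>r. Ab (fst \<phi> r)), (\<lambda>s. Ab (snd \<phi> s)))"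
    have fe: "\<phi> = Rp g0" unfolding g0_def using d1 d2 by (rule Rp_surj)
    have "Rp g0 \<in> C_frame (booleanization coS coS_le) coS_le" using p by (subst (asm) fe)
    then have "g0 \<in> F.CbM" by (subst (asm) C_Rp) (simp_all add: g0_def a1 a2)
    then show "\<phi> \<in> Rp ` F.CbM" unfolding fe by (rule imageI)
  qed
  show "Rp ` F.CbM \<subseteq> C_frame (booleanization coS coS_le) coS_le"
  proof
    fix \<phi> :: "(rat \<Rightarrow> 'a set) \<times> (rat \<Rightarrow> 'a set)"
    assume "\<phi> \<in> Rp ` F.CbM"
    then obtain g where g: "g \<in> F.CbM" "\<phi> = Rp g" by (elim imageE)
    have gb: "g \<in> F.CbarM" using g(1) unfolding F.CbM_def by blast
    have "Rp g \<in> C_frame (booleanization coS coS_le) coS_le"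
      by (subst C_Rp) (simp_all add: F.CbarM_D(1)[OF gb] F.CbarM_D(2)[OF gb] g(1))
    then show "\<phi> \<in> C_frame (booleanization coS coS_le) coS_le" using g(2) by simp
  qed
qed

end

theorem mainTheorem15:
  assumes "is_frame TYPE('a::complete_lattice)"
  shows "bij_betw beta_comp (FL :: ((rat \<Rightarrow> 'a set) \<times> (rat \<Rightarrow> 'a set)) set)
           (C_frame (booleanization coS coS_le) coS_le)
       \<and> (\<forall>f \<in> (FL :: ((rat \<Rightarrow> 'a set) \<times> (rat \<Rightarrow> 'a set)) set). \<forall>g \<in> FL.
            hom_le coS_le f g \<longleftrightarrow> hom_le coS_le (beta_comp f) (beta_comp g))"
proof -
  interpret frm_csl "TYPE('a)" by unfold_locales (rule assms)
  have M: "bij_betw F.betaM F.FLM F.CbM" and O: "\<forall>f\<in>F.FLM. \<forall>g\<in>F.FLM. hom_le (\<le>) f g \<longleftrightarrow> hom_le (\<le>) (F.betaM f) (F.betaM g)"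
    using F.main_abs by blast+
  have inj: "inj_on F.betaM F.FLM" and img: "F.betaM ` F.FLM = F.CbM" using M unfolding bij_betw_def by blast+
  have B: "bij_betw beta_comp (Rp ` F.FLM) (Rp ` F.CbM)"
    unfolding bij_betw_def
  proof
    show "inj_on beta_comp (Rp ` F.FLM)"
    proof (rule inj_onI)
      fix x y assume x: "x \<in> Rp ` F.FLM" and y: "y \<in> Rp ` F.FLM" and e: "beta_comp x = beta_comp y"
      from x obtain f where f: "f \<in> F.FLM" "x = Rp f" by (elim imageE)
      from y obtain g where g: "g \<in> F.FLM" "y = Rp g" by (elim imageE)
      have "Rp (F.betaM f) = Rp (F.betaM g)" using e unfolding f(2) g(2) beta_Rp .
      then have "F.betaM f = F.betaM g" by (rule Rp_inj)
      then have "f = g" using inj f(1) g(1) by (simp add: inj_on_def)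
      then show "x = y" using f(2) g(2) by simp
    qed
    have "beta_comp ` Rp ` F.FLM = Rp ` F.betaM ` F.FLM" by (simp add: image_image beta_Rp)
    then show "beta_comp ` Rp ` F.FLM = Rp ` F.CbM" by (simp add: img)
  qed
  have Ord: "\<forall>f \<in> Rp ` F.FLM. \<forall>g \<in> Rp ` F.FLM. hom_le coS_le f g \<longleftrightarrow> hom_le coS_le (beta_comp f) (beta_comp g)"
  proof (intro ballI)
    fix x y assume x: "x \<in> Rp ` F.FLM" and y: "y \<in> Rp ` F.FLM"
    from x obtain f where f: "f \<in> F.FLM" "x = Rp f" by (elim imageE)
    from y obtain g where g: "g \<in> F.FLM" "y = Rp g" by (elim imageE)
    show "hom_le coS_le x y \<longleftrightarrow> hom_le coS_le (beta_comp x) (beta_comp y)"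
      unfolding f(2) g(2) beta_Rp hom_le_Rp using O f(1) g(1) by blast
  qed
  show ?thesis unfolding FL_eq C_eq using B Ord by blast
qed


end
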